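(* Let $N$ be the coarse-grained compartment model whose internal chemistry is the one-species network $0\to S$ (rate constant $\kappa_b\ge0$), $S\to0$ (rate constant $\kappa_d\ge0$), with compartment parameters $\kappa_I,\kappa_E,\kappa_F,\kappa_C\ge0$, arbitrary inflow distribution $\mu$ on $\mathbb Z_{\ge0}$ (not necessarily with finite mean), and arbitrary fragmentation kernel $\psi$. For every choice of these parameters, $N$ is not explosive.
   Context: The state space of $N$ is $\mathcal N=\{n:\mathbb Z_{\ge0}\to\mathbb Z_{\ge0}\text{ with finite support}\}$, where $n_x$ is the number of compartments containing exactly $x$ molecules of $S$; $e_x$ is the indicator of $x$. The fragmentation kernel $\psi:\mathbb Z_{\ge0}^2\to[0,1]$ satisfies $\psi(x,y)=0$ for $y>x$ and $y\mapsto\psi(x,y)$ is a probability measure for each $x$. $N$ is the continuous-time Markov chain on $\mathcal N$ with generator $\mathcal LV(n)=\sum_{x=0}^\infty\Big[\kappa_bn_x\big(V(n-e_x+e_{x+1})-V(n)\big)+\kappa_dn_xx\big(V(n-e_x+e_{x-1})-V(n)\big)+\kappa_I\mu(x)\big(V(n+e_x)-V(n)\big)+\kappa_En_x\big(V(n-e_x)-V(n)\big)+\kappa_Fxn_x\sum_{y=0}^\infty\psi(x,y)\big(V(n-e_x+e_y+e_{x-y})-V(n)\big)+\kappa_C\binom{n_x}2\big(V(n-2e_x+e_{2x})-V(n)\big)+\sum_{y\ne x}\kappa_C\frac{n_xn_y}2\big(V(n-e_x-e_y+e_{x+y})-V(n)\big)\Big]$. (Each compartment independently gains an $S$ at rate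 $\kappa_b$ and loses each $S$ at rate $\kappa_d$; new compartments arrive at rate $\kappa_I$ with content distributed as $\mu$; each compartment exits at rate $\kappa_E$; a compartment with $x$ molecules fragments at rate $\kappa_Fx$ into daughters with $y$ and $x-y$ molecules, $y\sim\psi(x,\cdot)$; each pair of compartments coagulates at rate $\kappa_C$.) A continuous-time Markov chain is explosive if from some initial state it makes infinitely many jumps in finite time with positive probability, and non-explosive otherwise. *)

theory Defs
  imports "HOL-Probability.Probability"
begin

text \<open>A chain on state type 's is specified by a countable family of events of type 'e:
  event e fires in state s at rate r e s \<ge> 0 and moves the chain to tgt e s.
  The generator is  L V s = sum_e r e s (V (tgt e s) - V s).  Terms with tgt e s = s
  contribute nothing to the generator and are discarded.\<close>

definition trans_rate :: "('e \<Rightarrow> 's \<Rightarrow> real) \<Rightarrow> ('e \<Rightarrow> 's \<Rightarrow> 's) \<Rightarrow> 's \<Rightarrow> 's \<Rightarrow> real" where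
  "trans_rate r tgt s s' = (if s' = s then 0 else infsum (\<lambda>e. r e s) {e. tgt e s = s'})"

definition total_rate :: "('e \<Rightarrow> 's \<Rightarrow> real) \<Rightarrow> ('e \<Rightarrow> 's \<Rightarrow> 's) \<Rightarrow> 's \<Rightarrow> real" where
  "total_rate r tgt s = infsum (\<lambda>e. r e s) {e. tgt e s \<noteq> s}"

definition jump_prob :: "('e \<Rightarrow> 's \<Rightarrow> real) \<Rightarrow> ('e \<Rightarrow> 's \<Rightarrow> 's) \<Rightarrow> 's \<Rightarrow> 's \<Rightarrow> real" where
  "jump_prob r tgt s s' =
     (if total_rate r tgt s = 0 then (if s' = s then 1 else 0)
      else trans_rate r tgt s s' / total_rate r tgt s)"

text \<open>Jump chain / holding time construction (Norris, Sec. 2.6): Y is the jump chain started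
  at s0, E is an i.i.d. sequence of Exp(1) variables independent of Y; the k-th holding time is
  E k / q(Y k) (infinite if q(Y k) = 0).\<close>
definition ctmc_realization ::
  "('e \<Rightarrow> 's \<Rightarrow> real) \<Rightarrow> ('e \<Rightarrow> 's \<Rightarrow> 's) \<Rightarrow> 's \<Rightarrow> 'w measure \<Rightarrow>
   (nat \<Rightarrow> 'w \<Rightarrow> 's) \<Rightarrow> (nat \<Rightarrow> 'w \<Rightarrow> real) \<Rightarrow> bool" where
  "ctmc_realization r tgt s0 M Y E \<longleftrightarrow>
     prob_space M \<and>
     (\<forall>k. Y k \<in> measurable M (count_space UNIV)) \<and>
     (\<forall>k. E k \<in> borel_measurable M) \<and>
     (\<forall>k xs. measure M {\<omega> \<in> space M. \<forall>i\<le>k. Y i \<omega> = xs i} =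
        (if xs 0 = s0 then (\<Prod>i<k. jump_prob r tgt (xs i) (xs (Suc i))) else 0)) \<and>
     (\<forall>k xs t. (\<forall>i\<le>k. 0 \<le> t i) \<longrightarrow>
        measure M {\<omega> \<in> space M. \<forall>i\<le>k. Y i \<omega> = xs i \<and> E i \<omega> > t i} =
        measure M {\<omega> \<in> space M. \<forall>i\<le>k. Y i \<omega> = xs i} * (\<Prod>i\<le>k. exp (- t i)))"

definition explosion_time ::
  "('e \<Rightarrow> 's \<Rightarrow> real) \<Rightarrow> ('e \<Rightarrow> 's \<Rightarrow> 's) \<Rightarrow> (nat \<Rightarrow> 'w \<Rightarrow> 's) \<Rightarrow> (nat \<Rightarrow> 'w \<Rightarrow> real) \<Rightarrow> 'w \<Rightarrow> ennreal" where
  "explosion_time r tgt Y E \<omega> =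
     (\<Sum>k. if total_rate r tgt (Y k \<omega>) = 0 then \<infinity>
           else ennreal (E k \<omega> / total_rate r tgt (Y k \<omega>)))"

text \<open>The probability
  space is quantified over at the type 'w of the statement.\<close>
definition non_explosive ::
  "('e \<Rightarrow> 's \<Rightarrow> real) \<Rightarrow> ('e \<Rightarrow> 's \<Rightarrow> 's) \<Rightarrow> 's set \<Rightarrow> 'w itself \<Rightarrow> bool" where
  "non_explosive r tgt S (_ :: 'w itself) \<longleftrightarrow>
     (\<forall>s0\<in>S. \<forall>(M :: 'w measure) Y E. ctmc_realization r tgt s0 M Y E \<longrightarrow>
        (AE \<omega> in M. explosion_time r tgt Y E \<omega> = \<infinity>))"

text \<open>State space: finitely supported n : nat -> nat (n x = number of compartments with x molecules).\<close>
definition fin_states :: "(nat \<Rightarrow> nat) set" where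
  "fin_states = {n. finite {x. n x \<noteq> 0}}"

definition add1 :: "(nat \<Rightarrow> nat) \<Rightarrow> nat \<Rightarrow> (nat \<Rightarrow> nat)" where
  "add1 n x = n(x := Suc (n x))"

definition del1 :: "(nat \<Rightarrow> nat) \<Rightarrow> nat \<Rightarrow> (nat \<Rightarrow> nat)" where
  "del1 n x = n(x := n x - 1)"     \<comment> \<open>n - e_x (only used where n x \<ge> 1 or the rate is 0)\<close>

datatype cevent = Birth nat | Death nat | Inflow nat | Exit nat | Frag nat nat | Coag nat nat

definition comp_rate ::
  "real \<Rightarrow> real \<Rightarrow> real \<Rightarrow> real \<Rightarrow> real \<Rightarrow> real \<Rightarrow> nat pmf \<Rightarrow> (nat \<Rightarrow> nat pmf) \<Rightarrow>
   cevent \<Rightarrow> (nat \<Rightarrow> nat) \<Rightarrow> real" where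
  "comp_rate kb kd kI kE kF kC mu psi c n =
     (case c of
        Birth x \<Rightarrow> kb * real (n x)
      | Death x \<Rightarrow> kd * real (n x) * real x
      | Inflow x \<Rightarrow> kI * pmf mu x
      | Exit x \<Rightarrow> kE * real (n x)
      | Frag x y \<Rightarrow> kF * real x * real (n x) * pmf (psi x) y
      | Coag x y \<Rightarrow> (if x = y then kC * real (n x choose 2)
                     else kC * real (n x) * real (n y) / 2))"

definition comp_tgt :: "cevent \<Rightarrow> (nat \<Rightarrow> nat) \<Rightarrow> (nat \<Rightarrow> nat)" where
  "comp_tgt c n =
     (case c of
        Birth x \<Rightarrow> add1 (del1 n x) (x + 1)
      | Death x \<Rightarrow> add1 (del1 n x) (x - 1)
      | Inflow x \<Rightarrow> add1 n x
      | Exit x \<Rightarrow> del1 n x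
      | Frag x y \<Rightarrow> add1 (add1 (del1 n x) y) (x - y)
      | Coag x y \<Rightarrow> add1 (del1 (del1 n x) y) (x + y))"

end

theory Submission
  imports Defs
begin


lemma ennreal_infsum_nn:
  fixes f :: "'a \<Rightarrow> real"
  assumes nn: "\<And>x. x \<in> A \<Longrightarrow> 0 \<le> f x"
    and fin: "(\<integral>\<^sup>+x. ennreal (f x) \<partial>count_space A) < \<infinity>"
  shows "f summable_on A" "ennreal (infsum f A) = (\<integral>\<^sup>+x. ennreal (f x) \<partial>count_space A)"
proof -
  have int: "integrable (count_space A) f"
    by (rule integrableI_nonneg) (use nn fin in \<open>auto simp: AE_count_space\<close>)
  hence abs: "Infinite_Set_Sum.abs_summable_on f A"
    by (simp add: abs_summable_on_def)
  hence "Infinite_Sum.abs_summable_on f A"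
    using abs_summable_equivalent by blast
  thus "f summable_on A"
    by (rule abs_summable_summable)
  have "(\<integral>\<^sup>+x. ennreal (f x) \<partial>count_space A) = ennreal (infsetsum f A)"
    by (rule nn_integral_conv_infsetsum) (use abs nn in auto)
  also have "infsetsum f A = infsum f A"
    by (rule infsetsum_infsum[OF abs])
  finally show "ennreal (infsum f A) = (\<integral>\<^sup>+x. ennreal (f x) \<partial>count_space A)" by simp
qed

lemma cs_ind:
  fixes f :: "'a \<Rightarrow> ennreal"
  shows "(\<integral>\<^sup>+x. f x \<partial>count_space A) = (\<integral>\<^sup>+x. f x * indicator A x \<partial>count_space UNIV)"
  by (simp add: nn_integral_restrict_space[symmetric] restrict_count_space)

lemma nn_integral_count_space_subset_le:
  fixes f :: "'a \<Rightarrow> ennreal"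
  assumes "A \<subseteq> B"
  shows "(\<integral>\<^sup>+x. f x \<partial>count_space A) \<le> (\<integral>\<^sup>+x. f x \<partial>count_space B)"
proof -
  have "(\<integral>\<^sup>+x. f x \<partial>count_space A) = (\<integral>\<^sup>+x. f x * indicator A x \<partial>count_space UNIV)"
    by (rule cs_ind)
  also have "\<dots> \<le> (\<integral>\<^sup>+x. f x * indicator B x \<partial>count_space UNIV)"
    by (intro nn_integral_mono) (use assms in \<open>auto split: split_indicator\<close>)
  also have "\<dots> = (\<integral>\<^sup>+x. f x \<partial>count_space B)"
    by (rule cs_ind[symmetric])
  finally show ?thesis .
qed

lemma nn_integral_count_space_prod:
  fixes h :: "'a \<times> 'b \<Rightarrow> ennreal"
  shows "(\<integral>\<^sup>+p. h p \<partial>count_space (A \<times> B)) = (\<integral>\<^sup>+a. \<integral>\<^sup>+b. h (a, b) \<partial>count_space B \<partial>count_space A)"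
proof -
  have "(\<integral>\<^sup>+p. h p \<partial>count_space (A \<times> B)) = (\<integral>\<^sup>+p. h p * indicator (A \<times> B) p \<partial>count_space UNIV)"
    by (rule cs_ind)
  also have "\<dots> = (\<integral>\<^sup>+a. \<integral>\<^sup>+b. h (a, b) * indicator (A \<times> B) (a, b) \<partial>count_space UNIV \<partial>count_space UNIV)"
    by (rule nn_integral_fst_count_space[symmetric])
  also have "\<dots> = (\<integral>\<^sup>+a. (\<integral>\<^sup>+b. h (a, b) * indicator B b \<partial>count_space UNIV) * indicator A a \<partial>count_space UNIV)"
  proof (intro nn_integral_cong)
    fix a
    show "(\<integral>\<^sup>+b. h (a, b) * indicator (A \<times> B) (a, b) \<partial>count_space UNIV) =
      (\<integral>\<^sup>+b. h (a, b) * indicator B b \<partial>count_space UNIV) * indicator A a"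
      by (cases "a \<in> A") (auto simp: indicator_def)
  qed
  also have "\<dots> = (\<integral>\<^sup>+a. \<integral>\<^sup>+b. h (a, b) \<partial>count_space B \<partial>count_space A)"
    by (subst (2) cs_ind, subst cs_ind) (auto intro!: nn_integral_cong split: split_indicator)
  finally show ?thesis .
qed

definition pA :: "('e \<Rightarrow> 's \<Rightarrow> real) \<Rightarrow> ('e \<Rightarrow> 's \<Rightarrow> 's) \<Rightarrow> 's \<Rightarrow> nat \<Rightarrow> (nat \<Rightarrow> 's) \<Rightarrow> real" where
  "pA r tgt s0 K xs = (if xs 0 = s0 then (\<Prod>i<K. jump_prob r tgt (xs i) (xs (Suc i))) else 0)"

definition Paths :: "'s set \<Rightarrow> nat \<Rightarrow> (nat \<Rightarrow> 's) set" where
  "Paths R K = PiE {..K} (\<lambda>_. R)"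

definition SumG where
  "SumG r tgt s0 R \<phi> K g = (\<integral>\<^sup>+xs. ennreal (pA r tgt s0 K xs * (\<Prod>i<K. \<phi> (xs i))) * g (xs K) \<partial>count_space (Paths R K))"

lemma Paths_Suc: "Paths R (Suc K) = (\<lambda>(xs,y). xs(Suc K := y)) ` (Paths R K \<times> R)"
proof -
  have "Paths R (Suc K) = (\<lambda>(y, g). g(Suc K := y)) ` (R \<times> Paths R K)"
    unfolding Paths_def atMost_Suc by (rule PiE_insert_eq)
  also have "\<dots> = (\<lambda>(xs,y). xs(Suc K := y)) ` (Paths R K \<times> R)"
  proof (intro equalityI subsetI)
    fix z assume "z \<in> (\<lambda>(y, g). g(Suc K := y)) ` (R \<times> Paths R K)"
    then obtain y g where "y \<in> R" "g \<in> Paths R K" "z = g(Suc K := y)" by auto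
    then show "z \<in> (\<lambda>(xs,y). xs(Suc K := y)) ` (Paths R K \<times> R)"
      by (intro image_eqI[where x="(g, y)"]) auto
  next
    fix z assume "z \<in> (\<lambda>(xs,y). xs(Suc K := y)) ` (Paths R K \<times> R)"
    then obtain y g where "y \<in> R" "g \<in> Paths R K" "z = g(Suc K := y)" by auto
    then show "z \<in> (\<lambda>(y, g). g(Suc K := y)) ` (R \<times> Paths R K)"
      by (intro image_eqI[where x="(y, g)"]) auto
  qed
  finally show ?thesis .
qed

lemma Paths_Suc_inj: "inj_on (\<lambda>(xs,y). xs(Suc K := y)) (Paths R K \<times> R)"
proof (rule inj_onI)
  fix p1 p2 :: "(nat \<Rightarrow> 'a) \<times> 'a"
  assume p1: "p1 \<in> Paths R K \<times> R" and p2: "p2 \<in> Paths R K \<times> R"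
    and eq: "(\<lambda>(xs,y). xs(Suc K := y)) p1 = (\<lambda>(xs,y). xs(Suc K := y)) p2"
  obtain xs1 y1 where 1: "p1 = (xs1, y1)" by (cases p1)
  obtain xs2 y2 where 2: "p2 = (xs2, y2)" by (cases p2)
  have a: "xs1 \<in> Paths R K" "xs2 \<in> Paths R K" using p1 p2 1 2 by auto
  have e: "xs1(Suc K := y1) = xs2(Suc K := y2)" using eq 1 2 by simp
  have y: "y1 = y2" using fun_cong[OF e, of "Suc K"] by (simp only: fun_upd_same)
  have "xs1 = xs2"
  proof
    fix i show "xs1 i = xs2 i"
    proof (cases "i = Suc K")
      case True
      have "xs1 i = undefined" "xs2 i = undefined"
        using PiE_arb[OF a(1)[unfolded Paths_def], of i] PiE_arb[OF a(2)[unfolded Paths_def], of i] True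
        by simp_all
      then show ?thesis by simp
    next
      case False
      then show ?thesis using fun_cong[OF e, of i] by simp
    qed
  qed
  with y 1 2 show "p1 = p2" by simp
qed

lemma countable_Paths: "countable R \<Longrightarrow> countable (Paths R K)"
  unfolding Paths_def by (rule countable_PiE) auto

lemma pA_Suc: "pA r tgt s0 (Suc K) (xs(Suc K := y)) = pA r tgt s0 K xs * jump_prob r tgt (xs K) y"
proof -
  have "(\<Prod>i<K. jump_prob r tgt ((xs(Suc K := y)) i) ((xs(Suc K := y)) (Suc i))) =
      (\<Prod>i<K. jump_prob r tgt (xs i) (xs (Suc i)))"
    by (rule prod.cong) auto
  then show ?thesis unfolding pA_def by (simp add: prod.lessThan_Suc)
qed

lemma pA_nn: "(\<And>s s'. 0 \<le> jump_prob r tgt s s') \<Longrightarrow> 0 \<le> pA r tgt s0 K xs"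
  unfolding pA_def by (auto intro!: prod_nonneg)

definition wq :: "('e \<Rightarrow> 's \<Rightarrow> real) \<Rightarrow> ('e \<Rightarrow> 's \<Rightarrow> 's) \<Rightarrow> real \<Rightarrow> 's \<Rightarrow> bool \<Rightarrow> real" where
  "wq r tgt lam s b = (if total_rate r tgt s = 0 then 0 else if b then exp (- lam / total_rate r tgt s) else 1)"

definition phiq :: "('e \<Rightarrow> 's \<Rightarrow> real) \<Rightarrow> ('e \<Rightarrow> 's \<Rightarrow> 's) \<Rightarrow> real \<Rightarrow> 's \<Rightarrow> real" where
  "phiq r tgt lam s = (if total_rate r tgt s = 0 then 0 else exp (-1) * exp (- lam / total_rate r tgt s) + (1 - exp (-1)))"

lemma phiq_nn: "0 \<le> phiq r tgt lam s"
  unfolding phiq_def by (auto intro!: add_nonneg_nonneg)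

lemma phiq_le1: "phiq r tgt lam s \<le> 1" if "lam \<ge> 0" "total_rate r tgt s \<ge> 0"
proof -
  have "exp (- lam / total_rate r tgt s) \<le> 1" using that by (simp add: divide_nonneg_nonneg)
  then have "exp (-1) * exp (- lam / total_rate r tgt s) \<le> exp (-1)"
    by (simp add: mult_left_le)
  then show ?thesis unfolding phiq_def by auto
qed

context
  fixes r :: "'e::countable \<Rightarrow> 's \<Rightarrow> real" and tgt :: "'e \<Rightarrow> 's \<Rightarrow> 's" and R :: "'s set"
  assumes R_cnt: "countable R" and R_cl: "\<And>s e. s \<in> R \<Longrightarrow> tgt e s \<in> R"
    and r_nn: "\<And>e s. s \<in> R \<Longrightarrow> 0 \<le> r e s"
    and r_fin: "\<And>s. s \<in> R \<Longrightarrow> (\<integral>\<^sup>+e. ennreal (r e s) \<partial>count_space UNIV) < \<infinity>"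
begin

lemma r_fin_sub: "s \<in> R \<Longrightarrow> (\<integral>\<^sup>+e. ennreal (r e s) \<partial>count_space A) < \<infinity>"
  using nn_integral_count_space_subset_le[of A UNIV] r_fin le_less_trans by blast

lemma tr_ennreal: "s \<in> R \<Longrightarrow>
  ennreal (total_rate r tgt s) = (\<integral>\<^sup>+e. ennreal (r e s) \<partial>count_space {e. tgt e s \<noteq> s})"
  unfolding total_rate_def using r_fin_sub[of s "{e. tgt e s \<noteq> s}"]
  by (intro ennreal_infsum_nn(2)) (auto intro: r_nn)

lemma tr_nn: "s \<in> R \<Longrightarrow> 0 \<le> total_rate r tgt s"
  unfolding total_rate_def by (rule infsum_nonneg) (auto intro: r_nn)

lemma trans_ennreal: "s \<in> R \<Longrightarrow> s' \<noteq> s \<Longrightarrow>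
  ennreal (trans_rate r tgt s s') = (\<integral>\<^sup>+e. ennreal (r e s) \<partial>count_space {e. tgt e s = s'})"
  unfolding trans_rate_def using r_fin_sub[of s "{e. tgt e s = s'}"]
  by (simp, intro ennreal_infsum_nn(2)) (auto intro: r_nn)

lemma trans_nn: "s \<in> R \<Longrightarrow> 0 \<le> trans_rate r tgt s s'"
  unfolding trans_rate_def by (auto intro!: infsum_nonneg r_nn)

lemma jp_nn: "s \<in> R \<Longrightarrow> 0 \<le> jump_prob r tgt s s'"
  unfolding jump_prob_def using trans_nn tr_nn by auto

lemma P_eq:
  assumes s: "s \<in> R" and q: "total_rate r tgt s > 0"
  shows "(\<integral>\<^sup>+s'. ennreal (jump_prob r tgt s s') * g s' \<partial>count_space R) =
    ennreal (1 / total_rate r tgt s) * (\<integral>\<^sup>+e. ennreal (r e s) * g (tgt e s) \<partial>count_space {e. tgt e s \<noteq> s})"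
proof -
  define q where "q = total_rate r tgt s"
  define F where "F s' e = (if tgt e s = s' \<and> s' \<noteq> s then ennreal (r e s) * g (tgt e s) else 0)" for s' e
  have pt: "ennreal (jump_prob r tgt s s') * g s' = ennreal (1/q) * (\<integral>\<^sup>+e. F s' e \<partial>count_space UNIV)" for s'
  proof (cases "s' = s")
    case True
    then show ?thesis using q by (simp add: jump_prob_def trans_rate_def F_def q_def)
  next
    case False
    have "ennreal (jump_prob r tgt s s') = ennreal (1/q) * ennreal (trans_rate r tgt s s')"
      using q trans_nn[OF s, of s'] unfolding jump_prob_def q_def
      by (simp add: ennreal_mult'' divide_inverse mult.commute)
    also have "ennreal (trans_rate r tgt s s') = (\<integral>\<^sup>+e. ennreal (r e s) \<partial>count_space {e. tgt e s = s'})"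
      by (rule trans_ennreal[OF s False])
    finally have "ennreal (jump_prob r tgt s s') * g s' =
        ennreal (1/q) * ((\<integral>\<^sup>+e. ennreal (r e s) \<partial>count_space {e. tgt e s = s'}) * g s')"
      by (simp add: mult.assoc)
    also have "(\<integral>\<^sup>+e. ennreal (r e s) \<partial>count_space {e. tgt e s = s'}) * g s' =
        (\<integral>\<^sup>+e. ennreal (r e s) * g s' \<partial>count_space {e. tgt e s = s'})"
      by (rule nn_integral_multc[symmetric]) simp
    also have "\<dots> = (\<integral>\<^sup>+e. F s' e \<partial>count_space UNIV)"
      by (subst cs_ind) (auto intro!: nn_integral_cong simp: F_def False indicator_def)
    finally show ?thesis .
  qed
  have "(\<integral>\<^sup>+s'. ennreal (jump_prob r tgt s s') * g s' \<partial>count_space R) =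
      (\<integral>\<^sup>+s'. ennreal (1/q) * (\<integral>\<^sup>+e. F s' e \<partial>count_space UNIV) \<partial>count_space R)"
    by (simp add: pt)
  also have "\<dots> = ennreal (1/q) * (\<integral>\<^sup>+s'. (\<integral>\<^sup>+e. F s' e \<partial>count_space UNIV) \<partial>count_space R)"
    by (rule nn_integral_cmult) simp
  also have "(\<integral>\<^sup>+s'. (\<integral>\<^sup>+e. F s' e \<partial>count_space UNIV) \<partial>count_space R) =
      (\<integral>\<^sup>+e. (\<integral>\<^sup>+s'. F s' e \<partial>count_space R) \<partial>count_space UNIV)"
    by (rule nn_integral_count_space_nn_integral[symmetric]) (auto simp: R_cnt)
  also have "\<dots> = (\<integral>\<^sup>+e. (if tgt e s \<noteq> s then ennreal (r e s) * g (tgt e s) else 0) \<partial>count_space UNIV)"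
  proof (intro nn_integral_cong)
    fix e
    show "(\<integral>\<^sup>+s'. F s' e \<partial>count_space R) = (if tgt e s \<noteq> s then ennreal (r e s) * g (tgt e s) else 0)"
      by (subst nn_integral_count_space'[where A="{tgt e s}"]) (auto simp: F_def R_cl s)
  qed
  also have "\<dots> = (\<integral>\<^sup>+e. ennreal (r e s) * g (tgt e s) \<partial>count_space {e. tgt e s \<noteq> s})"
    by (subst (2) cs_ind) (auto intro!: nn_integral_cong simp: indicator_def)
  finally show ?thesis by (simp add: q_def)
qed

lemma P_sum1:
  assumes s: "s \<in> R"
  shows "(\<integral>\<^sup>+s'. ennreal (jump_prob r tgt s s') \<partial>count_space R) = 1"
proof (cases "total_rate r tgt s = 0")
  case True
  then show ?thesis
    by (subst nn_integral_count_space'[where A="{s}"]) (auto simp: jump_prob_def s)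
next
  case False
  hence q: "total_rate r tgt s > 0" using tr_nn[OF s] by simp
  have "(\<integral>\<^sup>+s'. ennreal (jump_prob r tgt s s') \<partial>count_space R) =
      (\<integral>\<^sup>+s'. ennreal (jump_prob r tgt s s') * 1 \<partial>count_space R)" by simp
  also have "\<dots> = ennreal (1 / total_rate r tgt s) * ennreal (total_rate r tgt s)"
    by (subst P_eq[OF s q]) (simp add: tr_ennreal[OF s])
  also have "\<dots> = 1" using q by (simp flip: ennreal_mult)
  finally show ?thesis .
qed


lemma SumG_0: assumes s0: "s0 \<in> R" shows "SumG r tgt s0 R \<phi> 0 g = g s0"
proof -
  define x0 :: "nat \<Rightarrow> 's" where "x0 = (\<lambda>_. undefined)(0 := s0)"
  have x0P: "x0 \<in> Paths R 0" using s0 by (auto simp: x0_def Paths_def PiE_def extensional_def)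
  have uniq: "xs = x0" if "xs \<in> Paths R 0" "xs 0 = s0" for xs
  proof
    fix i show "xs i = x0 i"
    proof (cases "i = 0")
      case True then show ?thesis using that by (simp add: x0_def)
    next
      case False then show ?thesis using PiE_arb[OF that(1)[unfolded Paths_def], of i] by (simp add: x0_def)
    qed
  qed
  have "SumG r tgt s0 R \<phi> 0 g = (\<Sum>xs\<in>{x0}. ennreal (pA r tgt s0 0 xs * (\<Prod>i<0. \<phi> (xs i))) * g (xs 0))"
    unfolding SumG_def
  proof (rule nn_integral_count_space')
    fix xs assume "xs \<in> Paths R 0" "xs \<notin> {x0}"
    then show "ennreal (pA r tgt s0 0 xs * (\<Prod>i<0. \<phi> (xs i))) * g (xs 0) = 0"
      using uniq by (auto simp: pA_def)
  qed (use x0P in auto)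
  also have "\<dots> = g s0" by (simp add: pA_def x0_def)
  finally show ?thesis .
qed

lemma pA_nn_R: "xs \<in> Paths R K \<Longrightarrow> 0 \<le> pA r tgt s0 K xs"
  unfolding pA_def Paths_def by (auto intro!: prod_nonneg jp_nn)

lemma SumG_Suc:
  assumes phinn: "\<And>s. s \<in> R \<Longrightarrow> 0 \<le> \<phi> s"
  shows "SumG r tgt s0 R \<phi> (Suc K) g =
    SumG r tgt s0 R \<phi> K (\<lambda>s. ennreal (\<phi> s) * (\<integral>\<^sup>+s'. ennreal (jump_prob r tgt s s') * g s' \<partial>count_space R))"
proof -
  define F where "F xs = ennreal (pA r tgt s0 (Suc K) xs * (\<Prod>i<Suc K. \<phi> (xs i))) * g (xs (Suc K))" for xs
  define u where "u = (\<lambda>(xs::nat\<Rightarrow>'s, y::'s). xs(Suc K := y))"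
  have bij: "bij_betw u (Paths R K \<times> R) (Paths R (Suc K))"
    unfolding u_def Paths_Suc by (rule inj_on_imp_bij_betw[OF Paths_Suc_inj])
  have "SumG r tgt s0 R \<phi> (Suc K) g = (\<integral>\<^sup>+xs. F xs \<partial>count_space (Paths R (Suc K)))"
    unfolding SumG_def F_def ..
  also have "\<dots> = (\<integral>\<^sup>+p. F (u p) \<partial>count_space (Paths R K \<times> R))"
    by (rule nn_integral_bij_count_space[OF bij, symmetric])
  also have "\<dots> = (\<integral>\<^sup>+xs. \<integral>\<^sup>+y. F (u (xs, y)) \<partial>count_space R \<partial>count_space (Paths R K))"
    by (rule nn_integral_count_space_prod)
  also have "\<dots> = (\<integral>\<^sup>+xs. ennreal (pA r tgt s0 K xs * (\<Prod>i<K. \<phi> (xs i))) *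
      (ennreal (\<phi> (xs K)) * (\<integral>\<^sup>+s'. ennreal (jump_prob r tgt (xs K) s') * g s' \<partial>count_space R)) \<partial>count_space (Paths R K))"
  proof (intro nn_integral_cong)
    fix xs assume "xs \<in> space (count_space (Paths R K))"
    hence xs: "xs \<in> Paths R K" by simp
    have xsR: "xs i \<in> R" if "i \<le> K" for i using xs that unfolding Paths_def by auto
    have pnn: "0 \<le> pA r tgt s0 K xs" by (rule pA_nn_R[OF xs])
    have prnn: "0 \<le> (\<Prod>i<K. \<phi> (xs i))" by (auto intro!: prod_nonneg phinn xsR)
    have Fu: "F (u (xs, y)) = ennreal (pA r tgt s0 K xs * (\<Prod>i<K. \<phi> (xs i))) *
        (ennreal (\<phi> (xs K)) * (ennreal (jump_prob r tgt (xs K) y) * g y))" for y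
    proof -
      have pr: "(\<Prod>i<Suc K. \<phi> ((xs(Suc K := y)) i)) = (\<Prod>i<K. \<phi> (xs i)) * \<phi> (xs K)"
        by (simp add: prod.lessThan_Suc)
      have "F (u (xs, y)) = ennreal ((pA r tgt s0 K xs * (\<Prod>i<K. \<phi> (xs i))) * \<phi> (xs K) * jump_prob r tgt (xs K) y) * g y"
        unfolding F_def u_def by (simp add: pA_Suc pr mult_ac)
      also have "\<dots> = ennreal (pA r tgt s0 K xs * (\<Prod>i<K. \<phi> (xs i))) *
        (ennreal (\<phi> (xs K)) * (ennreal (jump_prob r tgt (xs K) y) * g y))"
        using pnn prnn phinn[OF xsR[of K]] jp_nn[OF xsR[of K], of y]
        by (simp add: ennreal_mult mult_ac)
      finally show ?thesis .
    qed
    show "(\<integral>\<^sup>+y. F (u (xs, y)) \<partial>count_space R) = ennreal (pA r tgt s0 K xs * (\<Prod>i<K. \<phi> (xs i))) *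
      (ennreal (\<phi> (xs K)) * (\<integral>\<^sup>+s'. ennreal (jump_prob r tgt (xs K) s') * g s' \<partial>count_space R))"
      by (simp add: Fu nn_integral_cmult)
  qed
  also have "\<dots> = SumG r tgt s0 R \<phi> K (\<lambda>s. ennreal (\<phi> s) * (\<integral>\<^sup>+s'. ennreal (jump_prob r tgt s s') * g s' \<partial>count_space R))"
    unfolding SumG_def ..
  finally show ?thesis .
qed

lemma SumG_mono:
  assumes "\<And>s. s \<in> R \<Longrightarrow> g s \<le> g' s"
  shows "SumG r tgt s0 R \<phi> K g \<le> SumG r tgt s0 R \<phi> K g'"
  unfolding SumG_def
  by (intro nn_integral_mono mult_left_mono assms) (auto simp: Paths_def)

lemma SumG_cong:
  assumes "\<And>s. s \<in> R \<Longrightarrow> g s = g' s"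
  shows "SumG r tgt s0 R \<phi> K g = SumG r tgt s0 R \<phi> K g'"
  unfolding SumG_def
  by (intro nn_integral_cong) (auto simp: Paths_def PiE_iff assms)

lemma SumG_one: assumes s0: "s0 \<in> R" shows "SumG r tgt s0 R (\<lambda>_. 1) K (\<lambda>_. 1) = 1"
proof (induction K)
  case 0 show ?case using SumG_0[OF s0] .
next
  case (Suc K)
  have "SumG r tgt s0 R (\<lambda>_. 1) (Suc K) (\<lambda>_. 1) =
     SumG r tgt s0 R (\<lambda>_. 1) K (\<lambda>s. ennreal 1 * (\<integral>\<^sup>+s'. ennreal (jump_prob r tgt s s') * 1 \<partial>count_space R))"
    by (rule SumG_Suc) auto
  also have "\<dots> = SumG r tgt s0 R (\<lambda>_. 1) K (\<lambda>_. 1)"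
    by (rule SumG_cong) (simp add: P_sum1)
  finally show ?case using Suc by simp
qed

lemma SumG_bound:
  assumes s0: "s0 \<in> R" and phinn: "\<And>s. s \<in> R \<Longrightarrow> 0 \<le> \<phi> s"
    and H: "\<And>j s. s \<in> R \<Longrightarrow> ennreal (\<phi> s) * (\<integral>\<^sup>+s'. ennreal (jump_prob r tgt s s') * g j s' \<partial>count_space R) \<le> g (Suc j) s"
  shows "SumG r tgt s0 R \<phi> K (g j) \<le> g (j + K) s0"
proof (induction K arbitrary: j)
  case 0 show ?case using SumG_0[OF s0] by simp
next
  case (Suc K)
  have "SumG r tgt s0 R \<phi> (Suc K) (g j) =
     SumG r tgt s0 R \<phi> K (\<lambda>s. ennreal (\<phi> s) * (\<integral>\<^sup>+s'. ennreal (jump_prob r tgt s s') * g j s' \<partial>count_space R))"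
    by (rule SumG_Suc[OF phinn])
  also have "\<dots> \<le> SumG r tgt s0 R \<phi> K (g (Suc j))"
    by (rule SumG_mono[OF H])
  also have "\<dots> \<le> g (Suc j + K) s0" by (rule Suc.IH)
  finally show ?case by simp
qed

context
  fixes s0 :: 's and M :: "'w measure" and Y :: "nat \<Rightarrow> 'w \<Rightarrow> 's" and E :: "nat \<Rightarrow> 'w \<Rightarrow> real"
  assumes s0R: "s0 \<in> R" and real: "ctmc_realization r tgt s0 M Y E"
begin

lemma ps: "prob_space M" using real unfolding ctmc_realization_def by blast
interpretation prob_space M by (rule ps)

lemma Ymeas[measurable]: "Y i \<in> measurable M (count_space UNIV)"
  using real unfolding ctmc_realization_def by blast
lemma Emeas[measurable]: "E i \<in> borel_measurable M"
  using real unfolding ctmc_realization_def by blast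
lemma fdd: "measure M {\<omega> \<in> space M. \<forall>i\<le>k. Y i \<omega> = xs i} = pA r tgt s0 k xs"
  using real unfolding ctmc_realization_def pA_def by blast
lemma expo: "(\<And>i. i \<le> k \<Longrightarrow> 0 \<le> t i) \<Longrightarrow>
   measure M {\<omega> \<in> space M. \<forall>i\<le>k. Y i \<omega> = xs i \<and> E i \<omega> > t i} =
   measure M {\<omega> \<in> space M. \<forall>i\<le>k. Y i \<omega> = xs i} * (\<Prod>i\<le>k. exp (- t i))"
  using real unfolding ctmc_realization_def by blast

lemma Aev_sets[measurable]: "{\<omega> \<in> space M. \<forall>i\<le>k. Y i \<omega> = xs i} \<in> sets M"
  by measurable

lemma Fev_sets[measurable]: "{\<omega> \<in> space M. \<forall>i\<le>k. Y i \<omega> = xs i \<and> E i \<omega> > t i} \<in> sets M"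
  by measurable

lemma Dev_sets[measurable]: "finite S \<Longrightarrow> finite U \<Longrightarrow>
  {\<omega> \<in> space M. (\<forall>i\<le>k. Y i \<omega> = xs i) \<and> (\<forall>i\<in>S. 1 < E i \<omega>) \<and> (\<forall>i\<in>U. E i \<omega> \<le> 1)} \<in> sets M"
  by measurable

lemma null_E: "measure M ({\<omega> \<in> space M. \<forall>i\<le>k. Y i \<omega> = xs i} - {\<omega> \<in> space M. \<forall>i\<le>k. Y i \<omega> = xs i \<and> E i \<omega> > 0}) = 0"
proof -
  have "measure M ({\<omega> \<in> space M. \<forall>i\<le>k. Y i \<omega> = xs i} - {\<omega> \<in> space M. \<forall>i\<le>k. Y i \<omega> = xs i \<and> E i \<omega> > 0})
     = measure M {\<omega> \<in> space M. \<forall>i\<le>k. Y i \<omega> = xs i} - measure M {\<omega> \<in> space M. \<forall>i\<le>k. Y i \<omega> = xs i \<and> E i \<omega> > 0}"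
    by (rule finite_measure_Diff) (auto)
  also have "\<dots> = 0" using expo[of k "\<lambda>_. 0" xs] by simp
  finally show ?thesis .
qed

lemma D_formula:
  assumes "finite U" "finite S" "S \<inter> U = {}" "S \<union> U \<subseteq> {..k}"
  shows "measure M {\<omega> \<in> space M. (\<forall>i\<le>k. Y i \<omega> = xs i) \<and> (\<forall>i\<in>S. 1 < E i \<omega>) \<and> (\<forall>i\<in>U. E i \<omega> \<le> 1)}
    = pA r tgt s0 k xs * exp (-1) ^ card S * (1 - exp (-1)) ^ card U"
  using assms
proof (induction U arbitrary: S rule: finite_induct)
  case empty
  define D where "D = {\<omega> \<in> space M. (\<forall>i\<le>k. Y i \<omega> = xs i) \<and> (\<forall>i\<in>S. 1 < E i \<omega>)}"
  define t where "t i = (if i \<in> S then 1 else (0::real))" for i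
  define F where "F = {\<omega> \<in> space M. \<forall>i\<le>k. Y i \<omega> = xs i \<and> E i \<omega> > t i}"
  define A where "A = {\<omega> \<in> space M. \<forall>i\<le>k. Y i \<omega> = xs i}"
  define F0 where "F0 = {\<omega> \<in> space M. \<forall>i\<le>k. Y i \<omega> = xs i \<and> E i \<omega> > 0}"
  have Dm: "D \<in> sets M" unfolding D_def using empty by measurable
  have Fm: "F \<in> sets M" unfolding F_def by measurable
  have FD: "F \<subseteq> D" using empty unfolding F_def D_def t_def by force
  have "D - F \<subseteq> A - F0"
  proof
    fix \<omega> assume w: "\<omega> \<in> D - F"
    then obtain i where i: "i \<le> k" "\<not> E i \<omega> > t i" unfolding D_def F_def by auto
    have "i \<notin> S" using w i unfolding D_def t_def by auto
    then show "\<omega> \<in> A - F0" using w i unfolding D_def A_def F0_def t_def by auto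
  qed
  hence "measure M (D - F) \<le> measure M (A - F0)"
    by (intro finite_measure_mono) (auto simp: A_def F0_def)
  hence "measure M (D - F) = 0" using null_E[of k xs] measure_nonneg[of M "D - F"]
    unfolding A_def F0_def by linarith
  moreover have "measure M (D - F) = measure M D - measure M F"
    by (rule finite_measure_Diff[OF Dm Fm FD])
  ultimately have "measure M D = measure M F" by simp
  also have "\<dots> = pA r tgt s0 k xs * (\<Prod>i\<le>k. exp (- t i))"
    unfolding F_def by (subst expo) (auto simp: t_def fdd)
  also have "(\<Prod>i\<le>k. exp (- t i)) = exp (-1) ^ card S"
  proof -
    have "(\<Prod>i\<le>k. exp (- t i)) = (\<Prod>i\<in>{..k}. (if i \<in> S then exp (-1) else 1))"
      by (rule prod.cong) (auto simp: t_def)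
    also have "\<dots> = (\<Prod>i\<in>S. exp (-1))"
      using empty by (subst prod.If_cases) (auto simp: Int_absorb1 Int_commute Int_absorb2)
    finally show ?thesis by simp
  qed
  finally show ?case unfolding D_def by simp
next
  case (insert j U)
  have jS: "j \<notin> S" using insert by auto
  define D1 where "D1 = {\<omega> \<in> space M. (\<forall>i\<le>k. Y i \<omega> = xs i) \<and> (\<forall>i\<in>S. 1 < E i \<omega>) \<and> (\<forall>i\<in>U. E i \<omega> \<le> 1)}"
  define D2 where "D2 = {\<omega> \<in> space M. (\<forall>i\<le>k. Y i \<omega> = xs i) \<and> (\<forall>i\<in>insert j S. 1 < E i \<omega>) \<and> (\<forall>i\<in>U. E i \<omega> \<le> 1)}"
  have m1: "D1 \<in> sets M" unfolding D1_def using insert by measurable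
  have m2: "D2 \<in> sets M" unfolding D2_def using insert by measurable
  have sub: "D2 \<subseteq> D1" unfolding D1_def D2_def by auto
  have eq: "{\<omega> \<in> space M. (\<forall>i\<le>k. Y i \<omega> = xs i) \<and> (\<forall>i\<in>S. 1 < E i \<omega>) \<and> (\<forall>i\<in>insert j U. E i \<omega> \<le> 1)} = D1 - D2"
    unfolding D1_def D2_def by auto
  have IH1: "measure M D1 = pA r tgt s0 k xs * exp (-1) ^ card S * (1 - exp (-1)) ^ card U"
    unfolding D1_def using insert by (intro insert.IH) auto
  have IH2: "measure M D2 = pA r tgt s0 k xs * exp (-1) ^ card (insert j S) * (1 - exp (-1)) ^ card U"
    unfolding D2_def using insert jS by (intro insert.IH) auto
  have "measure M (D1 - D2) = measure M D1 - measure M D2" by (rule finite_measure_Diff[OF m1 m2 sub])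
  also have "\<dots> = pA r tgt s0 k xs * exp (-1) ^ card S * (1 - exp (-1)) ^ card (insert j U)"
    using IH1 IH2 jS insert by (simp add: algebra_simps)
  finally show ?case using eq by simp
qed

lemma CF:
  "measure M {\<omega> \<in> space M. (\<forall>i\<le>k. Y i \<omega> = xs i) \<and> (\<forall>i\<in>{i. i < k \<and> bs i}. 1 < E i \<omega>) \<and> (\<forall>i\<in>{i. i < k \<and> \<not> bs i}. E i \<omega> \<le> 1)}
    = pA r tgt s0 k xs * (\<Prod>i<k. if bs i then exp (-1) else 1 - exp (-1))"
proof -
  have eq1: "measure M {\<omega> \<in> space M. (\<forall>i\<le>k. Y i \<omega> = xs i) \<and> (\<forall>i\<in>{i. i < k \<and> bs i}. 1 < E i \<omega>) \<and> (\<forall>i\<in>{i. i < k \<and> \<not> bs i}. E i \<omega> \<le> 1)}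
    = pA r tgt s0 k xs * exp (-1) ^ card {i. i < k \<and> bs i} * (1 - exp (-1)) ^ card {i. i < k \<and> \<not> bs i}"
    by (rule D_formula) auto
  have eq2: "(\<Prod>i<k. if bs i then exp (-1) else 1 - exp (-1)) =
      exp (-1) ^ card {i. i < k \<and> bs i} * (1 - exp (-1)) ^ card {i. i < k \<and> \<not> bs i}"
  proof -
    have a: "{..<k} \<inter> {i. bs i} = {i. i < k \<and> bs i}" "{..<k} \<inter> - {i. bs i} = {i. i < k \<and> \<not> bs i}"
      by auto
    show ?thesis by (subst prod.If_cases) (simp_all only: a prod_constant finite_lessThan)
  qed
  show ?thesis unfolding eq1 eq2 by (simp only: mult.assoc)
qed

lemma pA_nn_M: "0 \<le> pA r tgt s0 k xs"
  using measure_nonneg[of M "{\<omega> \<in> space M. \<forall>i\<le>k. Y i \<omega> = xs i}"] by (simp only: fdd)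

lemma e1_nn: "0 \<le> 1 - exp (-1::real)" by simp

lemma inner_int:
  assumes wnn: "\<And>s b. 0 \<le> w s b"
  shows "(\<integral>\<^sup>+\<omega>. ennreal (\<Prod>i<k. w (xs i) (1 < E i \<omega>)) * indicator {\<omega> \<in> space M. \<forall>i\<le>k. Y i \<omega> = xs i} \<omega> \<partial>M)
    = ennreal (pA r tgt s0 k xs * (\<Prod>i<k. exp (-1) * w (xs i) True + (1 - exp (-1)) * w (xs i) False))"
proof -
  define BS where "BS = PiE {..<k} (\<lambda>_. UNIV :: bool set)"
  define Ab where "Ab bs = {\<omega> \<in> space M. (\<forall>i\<le>k. Y i \<omega> = xs i) \<and> (\<forall>i\<in>{i. i < k \<and> bs i}. 1 < E i \<omega>) \<and> (\<forall>i\<in>{i. i < k \<and> \<not> bs i}. E i \<omega> \<le> 1)}" for bs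
  define A where "A = {\<omega> \<in> space M. \<forall>i\<le>k. Y i \<omega> = xs i}"
  have finBS: "finite BS" unfolding BS_def by (intro finite_PiE) auto
  have Abm[measurable]: "Ab bs \<in> sets M" for bs unfolding Ab_def by measurable
  have pt: "ennreal (\<Prod>i<k. w (xs i) (1 < E i \<omega>)) * indicator A \<omega> =
      (\<Sum>bs\<in>BS. ennreal (\<Prod>i<k. w (xs i) (bs i)) * indicator (Ab bs) \<omega>)" if w: "\<omega> \<in> space M" for \<omega>
  proof (cases "\<omega> \<in> A")
    case False
    then have "\<omega> \<notin> Ab bs" for bs unfolding A_def Ab_def by auto
    then show ?thesis using False by simp
  next
    case True
    define b0 where "b0 = restrict (\<lambda>i. 1 < E i \<omega>) {..<k}"
    have b0BS: "b0 \<in> BS" unfolding b0_def BS_def by auto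
    have iff: "\<omega> \<in> Ab bs \<longleftrightarrow> bs = b0" if "bs \<in> BS" for bs
    proof
      assume "\<omega> \<in> Ab bs"
      then have "\<forall>i<k. bs i = (1 < E i \<omega>)" unfolding Ab_def by (auto simp: not_less)
      then show "bs = b0" using that unfolding b0_def BS_def by (auto simp: PiE_iff extensional_def fun_eq_iff)
    next
      assume "bs = b0"
      then show "\<omega> \<in> Ab bs" using True unfolding Ab_def A_def b0_def by (auto simp: not_less)
    qed
    have "(\<Sum>bs\<in>BS. ennreal (\<Prod>i<k. w (xs i) (bs i)) * indicator (Ab bs) \<omega>) =
        (\<Sum>bs\<in>BS. if bs = b0 then ennreal (\<Prod>i<k. w (xs i) (bs i)) else 0)"
      by (rule sum.cong) (auto simp: iff)
    also have "\<dots> = ennreal (\<Prod>i<k. w (xs i) (b0 i))"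
      using finBS b0BS by simp
    also have "(\<Prod>i<k. w (xs i) (b0 i)) = (\<Prod>i<k. w (xs i) (1 < E i \<omega>))"
      by (rule prod.cong) (auto simp: b0_def)
    finally show ?thesis using True by simp
  qed
  have "(\<integral>\<^sup>+\<omega>. ennreal (\<Prod>i<k. w (xs i) (1 < E i \<omega>)) * indicator A \<omega> \<partial>M) =
      (\<integral>\<^sup>+\<omega>. (\<Sum>bs\<in>BS. ennreal (\<Prod>i<k. w (xs i) (bs i)) * indicator (Ab bs) \<omega>) \<partial>M)"
    by (rule nn_integral_cong) (rule pt, simp)
  also have "\<dots> = (\<Sum>bs\<in>BS. \<integral>\<^sup>+\<omega>. ennreal (\<Prod>i<k. w (xs i) (bs i)) * indicator (Ab bs) \<omega> \<partial>M)"
    by (intro nn_integral_sum) measurable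
  also have "\<dots> = (\<Sum>bs\<in>BS. ennreal (\<Prod>i<k. w (xs i) (bs i)) * emeasure M (Ab bs))"
    by (rule sum.cong) (auto simp: nn_integral_cmult_indicator)
  also have "\<dots> = (\<Sum>bs\<in>BS. ennreal (pA r tgt s0 k xs * (\<Prod>i<k. w (xs i) (bs i) * (if bs i then exp (-1) else 1 - exp (-1)))))"
  proof (rule sum.cong)
    fix bs assume "bs \<in> BS"
    have "emeasure M (Ab bs) = ennreal (pA r tgt s0 k xs * (\<Prod>i<k. if bs i then exp (-1) else 1 - exp (-1)))"
      unfolding emeasure_eq_measure Ab_def CF ..
    moreover have "0 \<le> pA r tgt s0 k xs" by (rule pA_nn_M)
    ultimately show "ennreal (\<Prod>i<k. w (xs i) (bs i)) * emeasure M (Ab bs) =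
        ennreal (pA r tgt s0 k xs * (\<Prod>i<k. w (xs i) (bs i) * (if bs i then exp (-1) else 1 - exp (-1))))"
    proof -
      assume e: "emeasure M (Ab bs) = ennreal (pA r tgt s0 k xs * (\<Prod>i<k. if bs i then exp (-1) else 1 - exp (-1)))"
      have p1: "0 \<le> (\<Prod>i<k. w (xs i) (bs i))" by (rule prod_nonneg) (simp add: wnn)
      have "ennreal (\<Prod>i<k. w (xs i) (bs i)) * emeasure M (Ab bs) =
          ennreal ((\<Prod>i<k. w (xs i) (bs i)) * (pA r tgt s0 k xs * (\<Prod>i<k. if bs i then exp (-1) else 1 - exp (-1))))"
        unfolding e using p1 by (simp add: ennreal_mult')
      also have "(\<Prod>i<k. w (xs i) (bs i)) * (pA r tgt s0 k xs * (\<Prod>i<k. if bs i then exp (-1) else 1 - exp (-1)))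
          = pA r tgt s0 k xs * (\<Prod>i<k. w (xs i) (bs i) * (if bs i then exp (-1) else 1 - exp (-1)))"
        by (simp only: prod.distrib mult.assoc mult.left_commute)
      finally show ?thesis .
    qed
  qed simp
  also have "\<dots> = ennreal (\<Sum>bs\<in>BS. pA r tgt s0 k xs * (\<Prod>i<k. w (xs i) (bs i) * (if bs i then exp (-1) else 1 - exp (-1))))"
    using pA_nn_M[of k xs] e1_nn
    by (intro sum_ennreal mult_nonneg_nonneg prod_nonneg) (auto intro!: wnn)
  also have "(\<Sum>bs\<in>BS. pA r tgt s0 k xs * (\<Prod>i<k. w (xs i) (bs i) * (if bs i then exp (-1) else 1 - exp (-1))))
      = pA r tgt s0 k xs * (\<Prod>i<k. \<Sum>b\<in>UNIV. w (xs i) b * (if b then exp (-1) else 1 - exp (-1)))"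
    unfolding BS_def by (subst prod_sum_PiE) (simp_all add: sum_distrib_left)
  also have "(\<Prod>i<k. \<Sum>b\<in>UNIV. w (xs i) b * (if b then exp (-1) else 1 - exp (-1))) =
      (\<Prod>i<k. exp (-1) * w (xs i) True + (1 - exp (-1)) * w (xs i) False)"
    by (simp add: UNIV_bool mult_ac add.commute)
  finally show ?thesis unfolding A_def .
qed

lemma w_meas[measurable]: "(\<lambda>\<omega>. w (Y i \<omega>) (1 < E i \<omega>) :: real) \<in> borel_measurable M"
proof -
  have eq: "(\<lambda>\<omega>. w (Y i \<omega>) (1 < E i \<omega>)) = (\<lambda>\<omega>. if 1 < E i \<omega> then w (Y i \<omega>) True else w (Y i \<omega>) False)"
    by (auto simp: fun_eq_iff)
  have [measurable]: "(\<lambda>\<omega>. w (Y i \<omega>) b :: real) \<in> borel_measurable M" for b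
    by (rule measurable_compose[OF Ymeas]) simp
  show ?thesis unfolding eq by measurable
qed

lemma Z_meas[measurable]: "(\<lambda>\<omega>. ennreal (\<Prod>i<K. w (Y i \<omega>) (1 < E i \<omega>) :: real)) \<in> borel_measurable M"
  by measurable

lemma Omega0:
  "AE \<omega> in M. \<omega> \<in> (\<Union>xs\<in>Paths R K. {\<omega> \<in> space M. \<forall>i\<le>K. Y i \<omega> = xs i})"
proof -
  define A where "A xs = {\<omega> \<in> space M. \<forall>i\<le>K. Y i \<omega> = xs i}" for xs
  have disj: "disjoint_family_on A (Paths R K)"
    unfolding disjoint_family_on_def
  proof (intro ballI impI)
    fix xs ys assume "xs \<in> Paths R K" "ys \<in> Paths R K" "xs \<noteq> ys"
    then obtain i where "i \<le> K" "xs i \<noteq> ys i"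
      unfolding Paths_def by (metis PiE_ext atMost_iff)
    then show "A xs \<inter> A ys = {}" unfolding A_def by auto
  qed
  have "emeasure M (\<Union>xs\<in>Paths R K. A xs) = (\<integral>\<^sup>+xs. emeasure M (A xs) \<partial>count_space (Paths R K))"
    by (rule emeasure_UN_countable[OF _ _ disj]) (auto simp: A_def countable_Paths[OF R_cnt])
  also have "\<dots> = SumG r tgt s0 R (\<lambda>_. 1) K (\<lambda>_. 1)"
    unfolding SumG_def A_def by (intro nn_integral_cong) (simp add: emeasure_eq_measure fdd)
  also have "\<dots> = 1" by (rule SumG_one[OF s0R])
  finally have "prob (\<Union>xs\<in>Paths R K. A xs) = 1" by (simp add: emeasure_eq_measure)
  moreover have "(\<Union>xs\<in>Paths R K. A xs) \<in> sets M"
    by (intro sets.countable_UN'' countable_Paths R_cnt) (auto simp: A_def)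
  ultimately show ?thesis unfolding A_def by (intro AE_prob_1) auto
qed

lemma EZ:
  assumes wnn: "\<And>s b. 0 \<le> w s b"
  shows "(\<integral>\<^sup>+\<omega>. ennreal (\<Prod>i<K. w (Y i \<omega>) (1 < E i \<omega>)) \<partial>M) =
    SumG r tgt s0 R (\<lambda>s. exp (-1) * w s True + (1 - exp (-1)) * w s False) K (\<lambda>_. 1)"
proof -
  define A where "A xs = {\<omega> \<in> space M. \<forall>i\<le>K. Y i \<omega> = xs i}" for xs
  define Z where "Z \<omega> = ennreal (\<Prod>i<K. w (Y i \<omega>) (1 < E i \<omega>))" for \<omega>
  have Am[measurable]: "A xs \<in> sets M" for xs unfolding A_def by measurable
  have Zm[measurable]: "Z \<in> borel_measurable M" unfolding Z_def by measurable
  have "(\<integral>\<^sup>+\<omega>. Z \<omega> \<partial>M) = (\<integral>\<^sup>+\<omega>. Z \<omega> * indicator (\<Union>xs\<in>Paths R K. A xs) \<omega> \<partial>M)"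
    apply (rule nn_integral_cong_AE)
    using Omega0[of K] unfolding A_def by eventually_elim (auto simp: indicator_def)
  also have "\<dots> = (\<integral>\<^sup>+\<omega>. \<integral>\<^sup>+xs. Z \<omega> * indicator (A xs) \<omega> \<partial>count_space (Paths R K) \<partial>M)"
  proof (rule nn_integral_cong)
    fix \<omega> assume w: "\<omega> \<in> space M"
    show "Z \<omega> * indicator (\<Union>xs\<in>Paths R K. A xs) \<omega> = (\<integral>\<^sup>+xs. Z \<omega> * indicator (A xs) \<omega> \<partial>count_space (Paths R K))"
    proof (cases "\<omega> \<in> (\<Union>xs\<in>Paths R K. A xs)")
      case True
      then obtain x0 where x0: "x0 \<in> Paths R K" "\<omega> \<in> A x0" by auto
      have uniq: "xs = x0" if "xs \<in> Paths R K" "\<omega> \<in> A xs" for xs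
      proof (rule PiE_ext[OF that(1)[unfolded Paths_def] x0(1)[unfolded Paths_def]])
        fix i assume "i \<in> {..K}" then show "xs i = x0 i" using that x0 unfolding A_def by auto
      qed
      have "(\<integral>\<^sup>+xs. Z \<omega> * indicator (A xs) \<omega> \<partial>count_space (Paths R K)) = (\<Sum>xs\<in>{x0}. Z \<omega> * indicator (A xs) \<omega>)"
      proof (rule nn_integral_count_space')
        fix xs assume "xs \<in> Paths R K" "xs \<notin> {x0}"
        then have "\<omega> \<notin> A xs" using uniq by blast
        then show "Z \<omega> * indicator (A xs) \<omega> = 0" by simp
      qed (use x0 in auto)
      then show ?thesis using True x0 by simp
    next
      case False
      then have "\<omega> \<notin> A xs" if "xs \<in> Paths R K" for xs using that by auto
      then have "(\<integral>\<^sup>+xs. Z \<omega> * indicator (A xs) \<omega> \<partial>count_space (Paths R K)) = (\<integral>\<^sup>+xs. 0 \<partial>count_space (Paths R K))"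
        by (intro nn_integral_cong) simp
      then show ?thesis using False by simp
    qed
  qed
  also have "\<dots> = (\<integral>\<^sup>+xs. \<integral>\<^sup>+\<omega>. Z \<omega> * indicator (A xs) \<omega> \<partial>M \<partial>count_space (Paths R K))"
    by (rule nn_integral_count_space_nn_integral) (auto simp: countable_Paths R_cnt)
  also have "\<dots> = (\<integral>\<^sup>+xs. ennreal (pA r tgt s0 K xs * (\<Prod>i<K. exp (-1) * w (xs i) True + (1 - exp (-1)) * w (xs i) False)) * 1 \<partial>count_space (Paths R K))"
  proof (rule nn_integral_cong)
    fix xs
    have "(\<integral>\<^sup>+\<omega>. Z \<omega> * indicator (A xs) \<omega> \<partial>M) = (\<integral>\<^sup>+\<omega>. ennreal (\<Prod>i<K. w (xs i) (1 < E i \<omega>)) * indicator (A xs) \<omega> \<partial>M)"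
    proof (rule nn_integral_cong)
      fix \<omega> assume "\<omega> \<in> space M"
      show "Z \<omega> * indicator (A xs) \<omega> = ennreal (\<Prod>i<K. w (xs i) (1 < E i \<omega>)) * indicator (A xs) \<omega>"
      proof (cases "\<omega> \<in> A xs")
        case True
        then have "(\<Prod>i<K. w (Y i \<omega>) (1 < E i \<omega>)) = (\<Prod>i<K. w (xs i) (1 < E i \<omega>))"
          unfolding A_def by (intro prod.cong) auto
        then show ?thesis unfolding Z_def by simp
      qed simp
    qed
    also have "\<dots> = ennreal (pA r tgt s0 K xs * (\<Prod>i<K. exp (-1) * w (xs i) True + (1 - exp (-1)) * w (xs i) False))"
      unfolding A_def by (rule inner_int[OF wnn])
    finally show "(\<integral>\<^sup>+\<omega>. Z \<omega> * indicator (A xs) \<omega> \<partial>M) = ennreal (pA r tgt s0 K xs * (\<Prod>i<K. exp (-1) * w (xs i) True + (1 - exp (-1)) * w (xs i) False)) * 1"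
      by simp
  qed
  finally show ?thesis unfolding SumG_def Z_def .
qed

theorem crit:
  assumes lam: "lam > 0"
    and key: "\<And>\<epsilon>. \<epsilon> > 0 \<Longrightarrow> \<exists>\<psi> \<rho>. 0 \<le> \<rho> \<and> \<rho> < 1 \<and> \<psi> s0 < \<epsilon> \<and> (\<forall>s\<in>R. 0 \<le> \<psi> s) \<and>
        (\<forall>s\<in>R. \<psi> s < 1 \<longrightarrow> phiq r tgt lam s \<le> \<rho> \<and>
          ennreal (phiq r tgt lam s) * (\<integral>\<^sup>+s'. ennreal (jump_prob r tgt s s') * ennreal (\<psi> s') \<partial>count_space R) \<le> ennreal (\<psi> s))"
  shows "AE \<omega> in M. explosion_time r tgt Y E \<omega> = \<infinity>"
proof -
  define w where "w = wq r tgt lam"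
  define \<phi> where "\<phi> = phiq r tgt lam"
  have wnn: "0 \<le> w s b" for s b unfolding w_def wq_def by auto
  have phi_eq: "exp (-1) * w s True + (1 - exp (-1)) * w s False = \<phi> s" for s
    unfolding w_def wq_def \<phi>_def phiq_def by auto
  have phinn: "0 \<le> \<phi> s" for s unfolding \<phi>_def by (rule phiq_nn)
  have phile: "\<phi> s \<le> 1" if "s \<in> R" for s unfolding \<phi>_def using lam tr_nn[OF that] by (intro phiq_le1) auto
  define Z where "Z K \<omega> = (\<Prod>i<K. w (Y i \<omega>) (1 < E i \<omega>))" for K \<omega>
  have Zm[measurable]: "(\<lambda>\<omega>. ennreal (Z K \<omega>)) \<in> borel_measurable M" for K unfolding Z_def by measurable
  have Zm'[measurable]: "Z K \<in> borel_measurable M" for K unfolding Z_def by measurable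
  have EZb: "\<exists>K. (\<integral>\<^sup>+\<omega>. ennreal (Z K \<omega>) \<partial>M) \<le> ennreal \<epsilon>" if e: "\<epsilon> > 0" for \<epsilon>
  proof -
    obtain \<psi> \<rho> where r0: "0 \<le> \<rho>" and r1: "\<rho> < 1" and ps0: "\<psi> s0 < \<epsilon>/2" and psnn: "\<forall>s\<in>R. 0 \<le> \<psi> s"
      and H: "\<forall>s\<in>R. \<psi> s < 1 \<longrightarrow> \<phi> s \<le> \<rho> \<and>
          ennreal (\<phi> s) * (\<integral>\<^sup>+s'. ennreal (jump_prob r tgt s s') * ennreal (\<psi> s') \<partial>count_space R) \<le> ennreal (\<psi> s)"
      using key[of "\<epsilon>/2"] e unfolding \<phi>_def by auto
    define g where "g j s = ennreal (min 1 (\<rho> ^ j + \<psi> s))" for j s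
    have Hg: "ennreal (\<phi> s) * (\<integral>\<^sup>+s'. ennreal (jump_prob r tgt s s') * g j s' \<partial>count_space R) \<le> g (Suc j) s"
      if s: "s \<in> R" for j s
    proof -
      have int1: "(\<integral>\<^sup>+s'. ennreal (jump_prob r tgt s s') * g j s' \<partial>count_space R) \<le> 1"
      proof -
        have "(\<integral>\<^sup>+s'. ennreal (jump_prob r tgt s s') * g j s' \<partial>count_space R) \<le>
            (\<integral>\<^sup>+s'. ennreal (jump_prob r tgt s s') \<partial>count_space R)"
        proof (intro nn_integral_mono)
          fix x
          have "g j x \<le> 1" unfolding g_def by (simp add: ennreal_le_1)
          then show "ennreal (jump_prob r tgt s x) * g j x \<le> ennreal (jump_prob r tgt s x)"
            using mult_left_mono[of "g j x" 1 "ennreal (jump_prob r tgt s x)"] by simp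
        qed
        also have "\<dots> = 1" by (rule P_sum1[OF s])
        finally show ?thesis .
      qed
      have A1: "ennreal (\<phi> s) * (\<integral>\<^sup>+s'. ennreal (jump_prob r tgt s s') * g j s' \<partial>count_space R) \<le> 1"
      proof -
        have "ennreal (\<phi> s) * (\<integral>\<^sup>+s'. ennreal (jump_prob r tgt s s') * g j s' \<partial>count_space R) \<le> ennreal 1 * 1"
          by (intro mult_mono int1) (auto simp: phile[OF s])
        then show ?thesis by simp
      qed
      show ?thesis
      proof (cases "\<psi> s < 1")
        case False
        have "0 \<le> \<rho> ^ Suc j" using r0 by simp
        then have "g (Suc j) s = 1" using False unfolding g_def by (simp add: min_def)
        then show ?thesis using A1 by simp
      next
        case True
        have H1: "\<phi> s \<le> \<rho>" and H2: "ennreal (\<phi> s) * (\<integral>\<^sup>+s'. ennreal (jump_prob r tgt s s') * ennreal (\<psi> s') \<partial>count_space R) \<le> ennreal (\<psi> s)"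
          using H s True by auto
        have "(\<integral>\<^sup>+s'. ennreal (jump_prob r tgt s s') * g j s' \<partial>count_space R) \<le>
            (\<integral>\<^sup>+s'. ennreal (\<rho> ^ j) * ennreal (jump_prob r tgt s s') + ennreal (jump_prob r tgt s s') * ennreal (\<psi> s') \<partial>count_space R)"
        proof (intro nn_integral_mono)
          fix s' assume "s' \<in> space (count_space R)"
          then have "0 \<le> \<psi> s'" using psnn by auto
          then have "g j s' \<le> ennreal (\<rho> ^ j) + ennreal (\<psi> s')"
            unfolding g_def using r0 by (simp add: ennreal_plus[symmetric] del: ennreal_plus)
          then show "ennreal (jump_prob r tgt s s') * g j s' \<le> ennreal (\<rho> ^ j) * ennreal (jump_prob r tgt s s') + ennreal (jump_prob r tgt s s') * ennreal (\<psi> s')"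
            by (metis (no_types, lifting) distrib_left mult.commute mult_left_mono zero_le)
        qed
        also have "\<dots> = ennreal (\<rho> ^ j) * 1 + (\<integral>\<^sup>+s'. ennreal (jump_prob r tgt s s') * ennreal (\<psi> s') \<partial>count_space R)"
          by (subst nn_integral_add) (auto simp: nn_integral_cmult P_sum1[OF s])
        finally have "ennreal (\<phi> s) * (\<integral>\<^sup>+s'. ennreal (jump_prob r tgt s s') * g j s' \<partial>count_space R) \<le>
            ennreal (\<phi> s) * (ennreal (\<rho> ^ j) + (\<integral>\<^sup>+s'. ennreal (jump_prob r tgt s s') * ennreal (\<psi> s') \<partial>count_space R))"
          by (simp add: mult_left_mono)
        also have "\<dots> = ennreal (\<phi> s * \<rho> ^ j) + ennreal (\<phi> s) * (\<integral>\<^sup>+s'. ennreal (jump_prob r tgt s s') * ennreal (\<psi> s') \<partial>count_space R)"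
          by (simp add: distrib_left ennreal_mult phinn r0)
        also have "\<dots> \<le> ennreal (\<rho> ^ Suc j) + ennreal (\<psi> s)"
        proof (intro add_mono H2)
          have "\<phi> s * \<rho> ^ j \<le> \<rho> * \<rho> ^ j" using H1 r0 by (intro mult_right_mono) auto
          then show "ennreal (\<phi> s * \<rho> ^ j) \<le> ennreal (\<rho> ^ Suc j)" by (intro ennreal_leI) simp
        qed
        also have "\<dots> = ennreal (\<rho> ^ Suc j + \<psi> s)" using r0 psnn s by (simp add: ennreal_plus)
        finally have A2: "ennreal (\<phi> s) * (\<integral>\<^sup>+s'. ennreal (jump_prob r tgt s s') * g j s' \<partial>count_space R) \<le> ennreal (\<rho> ^ Suc j + \<psi> s)" .
        have gS: "g (Suc j) s = (if 1 \<le> \<rho> ^ Suc j + \<psi> s then 1 else ennreal (\<rho> ^ Suc j + \<psi> s))"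
          unfolding g_def by (simp add: min_def)
        show ?thesis unfolding gS using A1 A2 by simp
      qed
    qed
    obtain K where K: "\<rho> ^ K < \<epsilon>/2"
      using real_arch_pow_inv[of "\<epsilon>/2" \<rho>] e r0 r1 by auto
    have "(\<integral>\<^sup>+\<omega>. ennreal (Z K \<omega>) \<partial>M) = SumG r tgt s0 R \<phi> K (\<lambda>_. 1)"
      unfolding Z_def using EZ[of w K, OF wnn] phi_eq by simp
    also have "\<dots> = SumG r tgt s0 R \<phi> K (g 0)"
      by (rule SumG_cong) (use psnn in \<open>auto simp: g_def\<close>)
    also have "\<dots> \<le> g (0 + K) s0"
      by (rule SumG_bound[where g=g and \<phi>=\<phi>, OF s0R phinn Hg])
    also have "\<dots> \<le> ennreal (\<rho> ^ K + \<psi> s0)" unfolding g_def by (intro ennreal_leI) simp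
    also have "\<dots> \<le> ennreal \<epsilon>" using K ps0 by (intro ennreal_leI) simp
    finally show ?thesis by blast
  qed
  define N where "N m = {\<omega> \<in> space M. \<forall>K. exp (- lam * real m) \<le> Z K \<omega>}" for m :: nat
  have Nm[measurable]: "N m \<in> sets M" for m unfolding N_def by measurable
  have N0: "N m \<in> null_sets M" for m
  proof -
    define c where "c = exp (lam * real m)"
    have c: "c > 0" unfolding c_def by simp
    have "measure M (N m) \<le> c * \<epsilon>" if e: "\<epsilon> > 0" for \<epsilon>
    proof -
      obtain K where K: "(\<integral>\<^sup>+\<omega>. ennreal (Z K \<omega>) \<partial>M) \<le> ennreal \<epsilon>" using EZb[OF e] by blast
      have sub: "N m \<subseteq> {\<omega> \<in> space M. 1 \<le> ennreal c * ennreal (Z K \<omega>)}"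
      proof
        fix \<omega> assume "\<omega> \<in> N m"
        then have w: "\<omega> \<in> space M" "exp (- lam * real m) \<le> Z K \<omega>" unfolding N_def by auto
        have "1 = c * exp (- lam * real m)" unfolding c_def by (simp add: exp_minus field_simps)
        also have "\<dots> \<le> c * Z K \<omega>" using w c by simp
        finally have "1 \<le> c * Z K \<omega>" .
        then have "ennreal 1 \<le> ennreal (c * Z K \<omega>)" by (rule ennreal_leI)
        moreover have "0 \<le> Z K \<omega>" unfolding Z_def by (intro prod_nonneg) (simp add: wnn)
        ultimately show "\<omega> \<in> {\<omega> \<in> space M. 1 \<le> ennreal c * ennreal (Z K \<omega>)}"
          using w c ennreal_mult[of c "Z K \<omega>"] by simp
      qed
      have "emeasure M (N m) \<le> emeasure M {\<omega> \<in> space M. 1 \<le> ennreal c * ennreal (Z K \<omega>)}"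
        by (rule emeasure_mono[OF sub]) measurable
      also have "\<dots> \<le> ennreal c * (\<integral>\<^sup>+\<omega>. ennreal (Z K \<omega>) * indicator (space M) \<omega> \<partial>M)"
        by (rule nn_integral_Markov_inequality) auto
      also have "(\<integral>\<^sup>+\<omega>. ennreal (Z K \<omega>) * indicator (space M) \<omega> \<partial>M) = (\<integral>\<^sup>+\<omega>. ennreal (Z K \<omega>) \<partial>M)"
        by (rule nn_integral_cong) simp
      also have "ennreal c * \<dots> \<le> ennreal c * ennreal \<epsilon>" by (rule mult_left_mono[OF K]) simp
      also have "\<dots> = ennreal (c * \<epsilon>)" using c e by (simp add: ennreal_mult)
      finally show ?thesis using c e by (simp add: emeasure_eq_measure)
    qed
    then have "measure M (N m) \<le> 0"
    proof -
      assume h: "\<And>\<epsilon>. \<epsilon> > 0 \<Longrightarrow> measure M (N m) \<le> c * \<epsilon>"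
      show ?thesis
      proof (rule field_le_epsilon)
        fix e :: real assume "e > 0"
        then show "measure M (N m) \<le> 0 + e" using h[of "e / c"] c by simp
      qed
    qed
    then have "measure M (N m) = 0" using measure_nonneg[of M "N m"] by linarith
    then show ?thesis using Nm by (simp add: null_sets_def emeasure_eq_measure)
  qed
  have Nnull: "(\<Union>m. N m) \<in> null_sets M" using N0 by (rule null_sets_UN)
  show ?thesis
  proof (rule AE_I'[OF Nnull], rule subsetI)
    fix \<omega> assume "\<omega> \<in> {\<omega> \<in> space M. \<not> explosion_time r tgt Y E \<omega> = \<infinity>}"
    then have w: "\<omega> \<in> space M" and fin: "explosion_time r tgt Y E \<omega> \<noteq> \<infinity>" by auto
    define t where "t k = (if total_rate r tgt (Y k \<omega>) = 0 then \<infinity>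
           else ennreal (E k \<omega> / total_rate r tgt (Y k \<omega>)))" for k
    have T: "explosion_time r tgt Y E \<omega> = (\<Sum>k. t k)" unfolding explosion_time_def t_def ..
    obtain m :: nat where m: "explosion_time r tgt Y E \<omega> < of_nat m"
      using fin by (metis ennreal_Ex_less_of_nat infinity_ennreal_def less_top)
    have sumle: "(\<Sum>k<K. t k) \<le> explosion_time r tgt Y E \<omega>" for K
      unfolding T by (rule sum_le_suminf) auto
    have qnz: "total_rate r tgt (Y k \<omega>) \<noteq> 0" for k
    proof
      assume "total_rate r tgt (Y k \<omega>) = 0"
      then have "t k = \<infinity>" unfolding t_def by simp
      moreover have "t k \<le> (\<Sum>k'<Suc k. t k')" by (simp add: sum.lessThan_Suc)
      ultimately have "explosion_time r tgt Y E \<omega> = \<infinity>" using sumle[of "Suc k"]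
        by (metis infinity_ennreal_def top.extremum_uniqueI order.trans)
      then show False using fin by simp
    qed
    define x where "x k = max 0 (E k \<omega> / total_rate r tgt (Y k \<omega>))" for k
    have "\<omega> \<in> N m" unfolding N_def
    proof (intro CollectI conjI allI w)
      fix K
      have "ennreal (\<Sum>k<K. x k) = (\<Sum>k<K. t k)"
        unfolding x_def t_def using qnz by (simp add: sum_ennreal[symmetric] ennreal_max_0)
      also have "\<dots> \<le> of_nat m" using sumle[of K] m by simp
      finally have xs: "(\<Sum>k<K. x k) \<le> real m"
        by (metis ennreal_le_iff ennreal_of_nat_eq_real_of_nat of_nat_0_le_iff)
      have "exp (- lam * real m) \<le> exp (- lam * (\<Sum>k<K. x k))"
        using xs lam by simp
      also have "\<dots> = (\<Prod>k<K. exp (- lam * x k))"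
        by (simp add: sum_distrib_left sum_negf exp_sum[symmetric])
      also have "\<dots> \<le> Z K \<omega>"
        unfolding Z_def
      proof (rule prod_mono, rule conjI)
        fix k assume "k \<in> {..<K}"
        show "0 \<le> exp (- lam * x k)" by simp
        show "exp (- lam * x k) \<le> w (Y k \<omega>) (1 < E k \<omega>)"
        proof (cases "1 < E k \<omega>")
          case True
          show ?thesis
          proof (cases "total_rate r tgt (Y k \<omega>) > 0")
            case qp: True
            have "1 / total_rate r tgt (Y k \<omega>) \<le> x k"
              unfolding x_def using True qp by (auto simp: divide_right_mono intro: max.coboundedI2)
            then have "- lam * x k \<le> - lam / total_rate r tgt (Y k \<omega>)"
              using lam by (simp add: divide_inverse mult_left_mono)
            then show ?thesis using True qnz[of k] unfolding w_def wq_def by simp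
          next
            case qn: False
            then have "total_rate r tgt (Y k \<omega>) < 0" using qnz[of k] by simp
            then have "E k \<omega> / total_rate r tgt (Y k \<omega>) < 0" using True
              by (intro divide_pos_neg) auto
            then have "x k = 0" unfolding x_def by simp
            moreover have "- lam / total_rate r tgt (Y k \<omega>) \<ge> 0"
              using divide_pos_neg[OF lam \<open>total_rate r tgt (Y k \<omega>) < 0\<close>] by simp
            ultimately show ?thesis using True qnz[of k] unfolding w_def wq_def by simp
          qed
        next
          case False
          have "0 \<le> x k" unfolding x_def by simp
          then have "exp (- lam * x k) \<le> 1" using lam by simp
          then show ?thesis using False qnz[of k] unfolding w_def wq_def by simp
        qed
      qed
      finally show "exp (- lam * real m) \<le> Z K \<omega>" .
    qed
    then show "\<omega> \<in> (\<Union>m. N m)" by blast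
  qed
qed

end

end



instance cevent :: countable by countable_datatype

definition supp :: "(nat \<Rightarrow> nat) \<Rightarrow> nat set" where "supp n = {x. n x \<noteq> 0}"
definition sz :: "(nat \<Rightarrow> nat) \<Rightarrow> nat" where "sz n = (\<Sum>x\<in>supp n. (x + 1) * n x)"
definition cnt :: "(nat \<Rightarrow> nat) \<Rightarrow> nat" where "cnt n = (\<Sum>x\<in>supp n. n x)"
definition mass :: "(nat \<Rightarrow> nat) \<Rightarrow> nat" where "mass n = (\<Sum>x\<in>supp n. x * n x)"

lemma fin_supp: "n \<in> fin_states \<Longrightarrow> finite (supp n)"
  by (simp add: fin_states_def supp_def)

lemma sz_eq: "sz n = cnt n + mass n"
  unfolding sz_def cnt_def mass_def by (simp add: sum.distrib[symmetric] algebra_simps)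

lemma sum_supp_any:
  assumes "finite S" "supp n \<subseteq> S" "\<And>x. n x = 0 \<Longrightarrow> f x = (0::'a::comm_monoid_add)"
  shows "(\<Sum>x\<in>supp n. f x) = (\<Sum>x\<in>S. f x)"
  by (rule sum.mono_neutral_left) (use assms in \<open>auto simp: supp_def\<close>)

lemma supp_upd: "supp (n(x := v)) \<subseteq> supp n \<union> {x}"
  by (auto simp: supp_def)

lemma fin_upd: "n \<in> fin_states \<Longrightarrow> n(x := v) \<in> fin_states"
proof -
  assume "n \<in> fin_states"
  then have "finite (supp n \<union> {x})" by (simp add: fin_supp)
  then have "finite (supp (n(x := v)))" by (rule finite_subset[OF supp_upd])
  then show ?thesis by (simp add: fin_states_def supp_def)
qed

lemma fin_add1: "n \<in> fin_states \<Longrightarrow> add1 n x \<in> fin_states"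
  unfolding add1_def by (rule fin_upd)
lemma fin_del1: "n \<in> fin_states \<Longrightarrow> del1 n x \<in> fin_states"
  unfolding del1_def by (rule fin_upd)

lemma fin_tgt: "n \<in> fin_states \<Longrightarrow> comp_tgt c n \<in> fin_states"
  unfolding comp_tgt_def by (cases c) (auto intro!: fin_add1 fin_del1)

lemma sz_upd:
  assumes n: "n \<in> fin_states"
  shows "sz (n(x := v)) + (x + 1) * n x = sz n + (x + 1) * v"
proof -
  define S where "S = insert x (supp n)"
  have S: "finite S" using fin_supp[OF n] by (simp add: S_def)
  have "sz (n(x := v)) = (\<Sum>y\<in>S. (y + 1) * (n(x := v)) y)"
    unfolding sz_def by (rule sum_supp_any) (use S supp_upd[of n x v] in \<open>auto simp: S_def\<close>)
  also have "\<dots> = (x + 1) * v + (\<Sum>y\<in>S - {x}. (y + 1) * n y)"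
    using S by (subst sum.remove[of S x]) (auto simp: S_def intro!: sum.cong)
  finally have 1: "sz (n(x := v)) = (x + 1) * v + (\<Sum>y\<in>S - {x}. (y + 1) * n y)" .
  have "sz n = (\<Sum>y\<in>S. (y + 1) * n y)"
    unfolding sz_def by (rule sum_supp_any) (use S in \<open>auto simp: S_def\<close>)
  also have "\<dots> = (x + 1) * n x + (\<Sum>y\<in>S - {x}. (y + 1) * n y)"
    using S by (subst sum.remove[of S x]) (auto simp: S_def)
  finally show ?thesis using 1 by simp
qed

lemma sz_add1: "n \<in> fin_states \<Longrightarrow> sz (add1 n x) = sz n + (x + 1)"
  using sz_upd[of n x "Suc (n x)"] unfolding add1_def by simp

lemma sz_del1: "n \<in> fin_states \<Longrightarrow> n x \<ge> 1 \<Longrightarrow> sz (del1 n x) + (x + 1) = sz n"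
  using sz_upd[of n x "n x - 1"] unfolding del1_def by (cases "n x") auto

lemma countable_fin: "countable fin_states"
proof -
  define f :: "nat list \<Rightarrow> nat \<Rightarrow> nat" where "f xs = (\<lambda>i. if i < length xs then xs ! i else 0)" for xs
  have "fin_states \<subseteq> range f"
  proof
    fix n assume n: "n \<in> fin_states"
    define N where "N = Suc (Max (insert 0 (supp n)))"
    have "n i = 0" if "i \<ge> N" for i
    proof (rule ccontr)
      assume "n i \<noteq> 0"
      then have "i \<in> supp n" by (simp add: supp_def)
      then have "i \<le> Max (insert 0 (supp n))" using fin_supp[OF n] by simp
      then show False using that by (simp add: N_def)
    qed
    then have "n = f (map n [0..<N])" by (auto simp: f_def fun_eq_iff not_less)
    then show "n \<in> range f" by blast
  qed
  then show ?thesis by (rule countable_subset) simp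
qed

lemma reidx:
  fixes f :: "'b \<Rightarrow> ennreal" and h :: "'a \<Rightarrow> 'b"
  assumes "inj h"
  shows "(\<integral>\<^sup>+x. f (h x) \<partial>count_space UNIV) = (\<integral>\<^sup>+e. f e * indicator (range h) e \<partial>count_space UNIV)"
proof -
  have "(\<integral>\<^sup>+x. f (h x) \<partial>count_space UNIV) = (\<integral>\<^sup>+e. f e \<partial>count_space (range h))"
    by (rule nn_integral_bij_count_space) (use assms in \<open>simp add: inj_on_imp_bij_betw\<close>)
  also have "\<dots> = (\<integral>\<^sup>+e. f e * indicator (range h) e \<partial>count_space UNIV)" by (rule cs_ind)
  finally show ?thesis .
qed

lemma ev_decomp:
  fixes f :: "cevent \<Rightarrow> ennreal"
  shows "(\<integral>\<^sup>+e. f e \<partial>count_space UNIV) =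
    (\<integral>\<^sup>+x. f (Birth x) \<partial>count_space UNIV) + (\<integral>\<^sup>+x. f (Death x) \<partial>count_space UNIV) +
    (\<integral>\<^sup>+x. f (Inflow x) \<partial>count_space UNIV) + (\<integral>\<^sup>+x. f (Exit x) \<partial>count_space UNIV) +
    (\<integral>\<^sup>+x. \<integral>\<^sup>+y. f (Frag x y) \<partial>count_space UNIV \<partial>count_space UNIV) +
    (\<integral>\<^sup>+x. \<integral>\<^sup>+y. f (Coag x y) \<partial>count_space UNIV \<partial>count_space UNIV)"
proof -
  define hF where "hF p = Frag (fst p) (snd p)" for p
  define hC where "hC p = Coag (fst p) (snd p)" for p
  have iF: "inj hF" unfolding hF_def by (auto simp: inj_def prod_eq_iff)
  have iC: "inj hC" unfolding hC_def by (auto simp: inj_def prod_eq_iff)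
  have pF: "(\<integral>\<^sup>+x. \<integral>\<^sup>+y. f (Frag x y) \<partial>count_space UNIV \<partial>count_space UNIV) = (\<integral>\<^sup>+p. f (hF p) \<partial>count_space UNIV)"
    unfolding hF_def using nn_integral_fst_count_space[of "\<lambda>p. f (Frag (fst p) (snd p))"] by simp
  have pC: "(\<integral>\<^sup>+x. \<integral>\<^sup>+y. f (Coag x y) \<partial>count_space UNIV \<partial>count_space UNIV) = (\<integral>\<^sup>+p. f (hC p) \<partial>count_space UNIV)"
    unfolding hC_def using nn_integral_fst_count_space[of "\<lambda>p. f (Coag (fst p) (snd p))"] by simp
  have pt: "f e = f e * indicator (range Birth) e + f e * indicator (range Death) e + f e * indicator (range Inflow) e
     + f e * indicator (range Exit) e + f e * indicator (range hF) e + f e * indicator (range hC) e" for e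
    by (cases e) (auto simp: indicator_def hF_def hC_def image_iff)
  have "(\<integral>\<^sup>+e. f e \<partial>count_space UNIV) = (\<integral>\<^sup>+e. f e * indicator (range Birth) e + f e * indicator (range Death) e + f e * indicator (range Inflow) e
     + f e * indicator (range Exit) e + f e * indicator (range hF) e + f e * indicator (range hC) e \<partial>count_space UNIV)"
    by (subst pt) simp
  also have "\<dots> = (\<integral>\<^sup>+e. f e * indicator (range Birth) e \<partial>count_space UNIV) + (\<integral>\<^sup>+e. f e * indicator (range Death) e \<partial>count_space UNIV)
     + (\<integral>\<^sup>+e. f e * indicator (range Inflow) e \<partial>count_space UNIV) + (\<integral>\<^sup>+e. f e * indicator (range Exit) e \<partial>count_space UNIV)
     + (\<integral>\<^sup>+e. f e * indicator (range hF) e \<partial>count_space UNIV) + (\<integral>\<^sup>+e. f e * indicator (range hC) e \<partial>count_space UNIV)"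
    by (simp add: nn_integral_add)
  also have "\<dots> = (\<integral>\<^sup>+x. f (Birth x) \<partial>count_space UNIV) + (\<integral>\<^sup>+x. f (Death x) \<partial>count_space UNIV) +
    (\<integral>\<^sup>+x. f (Inflow x) \<partial>count_space UNIV) + (\<integral>\<^sup>+x. f (Exit x) \<partial>count_space UNIV) +
    (\<integral>\<^sup>+p. f (hF p) \<partial>count_space UNIV) + (\<integral>\<^sup>+p. f (hC p) \<partial>count_space UNIV)"
    by (simp add: reidx inj_def reidx[OF iF, of f] reidx[OF iC, of f])
  finally show ?thesis by (simp add: pF pC)
qed

lemma sum_supp_nn:
  assumes n: "n \<in> fin_states" and z: "\<And>x. n x = 0 \<Longrightarrow> f x = 0" and nn: "\<And>x. 0 \<le> f x"
  shows "(\<integral>\<^sup>+x. ennreal (f x) \<partial>count_space UNIV) = ennreal (\<Sum>x\<in>supp n. f x)"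
proof -
  have "(\<integral>\<^sup>+x. ennreal (f x) \<partial>count_space UNIV) = (\<Sum>x\<in>supp n. ennreal (f x))"
    by (rule nn_integral_count_space') (use fin_supp[OF n] z in \<open>auto simp: supp_def\<close>)
  also have "\<dots> = ennreal (\<Sum>x\<in>supp n. f x)" by (rule sum_ennreal) (simp add: nn)
  finally show ?thesis .
qed

lemma exp_neg_le: "0 \<le> x \<Longrightarrow> x \<le> 1 \<Longrightarrow> exp (- x) \<le> 1 - x / (2::real)"
proof -
  assume x: "0 \<le> x" "x \<le> 1"
  have "1 + x \<le> exp x" by (rule exp_ge_add_one_self)
  then have "exp (- x) \<le> 1 / (1 + x)" using x by (simp add: exp_minus field_simps)
  also have "1 / (1 + x) \<le> 1 - x / 2"
  proof -
    have xx: "x * x \<le> 1 * x" using x by (intro mult_right_mono) auto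
    have eq: "(1 - x / 2) * (1 + x) = 1 + (x - x * x) / 2" by (simp add: field_simps)
    have "1 \<le> (1 - x / 2) * (1 + x)" unfolding eq using xx by simp
    then show ?thesis using x by (simp add: divide_le_eq)
  qed
  finally show ?thesis .
qed

lemma RL:
  fixes q \<psi> J \<epsilon> c lam p \<kappa> :: real
  assumes q: "q > 0" and psi: "\<psi> \<ge> 0" and J: "J \<ge> 0" "J \<le> c * \<psi>" "J \<le> q * \<epsilon>"
    and eps: "\<epsilon> \<le> \<kappa> * \<psi>" and c: "c > 0" and p: "p = exp (-1)" and lam: "lam = 2 * c / p"
    and kap: "\<kappa> = p * (1 - exp (-1))"
  shows "(p * exp (- lam / q) + (1 - p)) * (\<psi> + J / q) \<le> \<psi>"
proof -
  have p0: "0 < p" "p < 1" using p by auto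
  have phinn: "0 \<le> p * exp (- lam / q) + (1 - p)" using p0 by (simp add: add_nonneg_nonneg)
  have lam0: "0 \<le> lam" using c p0 by (simp add: lam)
  show ?thesis
  proof (cases "lam \<le> q")
    case True
    define x where "x = lam / q"
    have x: "0 \<le> x" "x \<le> 1" using True q lam0 by (auto simp: x_def field_simps)
    have "exp (- lam / q) \<le> 1 - x / 2" using exp_neg_le[OF x] by (simp add: x_def)
    then have "p * exp (- lam / q) + (1 - p) \<le> p * (1 - x / 2) + (1 - p)"
      using p0 by simp
    also have "\<dots> = 1 - c / q" using p0 q by (simp add: x_def lam field_simps)
    finally have phi: "p * exp (- lam / q) + (1 - p) \<le> 1 - c / q" .
    have cq: "c / q \<le> 1"
    proof -
      have "2 * c \<le> lam" using p0 c by (simp add: lam field_simps)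
      then have "c \<le> q" using True c by linarith
      then show ?thesis using q by simp
    qed
    have "J / q \<le> c * \<psi> / q" using J q by (simp add: divide_right_mono)
    then have "(p * exp (- lam / q) + (1 - p)) * (\<psi> + J / q) \<le> (p * exp (- lam / q) + (1 - p)) * (\<psi> + c * \<psi> / q)"
      using phinn by (intro mult_left_mono) auto
    also have "\<dots> \<le> (1 - c / q) * (\<psi> + c * \<psi> / q)"
      using phi psi c q by (intro mult_right_mono) (auto intro!: add_nonneg_nonneg)
    also have "\<dots> = \<psi> - \<psi> * (c / q) ^ 2" using q by (simp add: field_simps power2_eq_square)
    also have "\<dots> \<le> \<psi>" using psi by simp
    finally show ?thesis .
  next
    case False
    then have "1 < lam / q" using q by (simp add: field_simps)
    then have "exp (- lam / q) \<le> exp (-1)" by simp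
    then have phi: "p * exp (- lam / q) + (1 - p) \<le> 1 - \<kappa>" using p0 by (simp add: kap p algebra_simps)
    have phi1: "p * exp (- lam / q) + (1 - p) \<le> 1"
    proof -
      have "exp (- lam / q) \<le> 1" using lam0 q by simp
      then show ?thesis using p0 by (simp add: mult_left_le)
    qed
    have Jq: "J / q \<le> \<epsilon>" using J q by (simp add: field_simps)
    have "(p * exp (- lam / q) + (1 - p)) * (\<psi> + J / q) = (p * exp (- lam / q) + (1 - p)) * \<psi> + (p * exp (- lam / q) + (1 - p)) * (J / q)"
      by (simp add: distrib_left)
    also have "\<dots> \<le> (1 - \<kappa>) * \<psi> + 1 * (J / q)"
      using phi phi1 psi J q by (intro add_mono mult_right_mono) auto
    also have "\<dots> \<le> \<psi>" using Jq eps by (simp add: algebra_simps)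
    finally show ?thesis .
  qed
qed

context
  fixes kb kd kI kE kF kC :: real and mu :: "nat pmf" and psi :: "nat \<Rightarrow> nat pmf"
  assumes kb: "kb \<ge> 0" and kd: "kd \<ge> 0" and kI: "kI \<ge> 0" and kE: "kE \<ge> 0" and kF: "kF \<ge> 0" and kC: "kC \<ge> 0"
    and psi_le: "\<And>x. set_pmf (psi x) \<subseteq> {..x}"
begin

abbreviation "rt \<equiv> comp_rate kb kd kI kE kF kC mu psi"

lemma rt_simps:
  "rt (Birth x) n = kb * real (n x)"
  "rt (Death x) n = kd * real (n x) * real x"
  "rt (Inflow x) n = kI * pmf mu x"
  "rt (Exit x) n = kE * real (n x)"
  "rt (Frag x y) n = kF * real x * real (n x) * pmf (psi x) y"
  "rt (Coag x y) n = (if x = y then kC * real (n x choose 2) else kC * real (n x) * real (n y) / 2)"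
  by (simp_all add: comp_rate_def)

lemma rt_nn: "0 \<le> rt c n"
  by (cases c) (auto simp: rt_simps kb kd kI kE kF kC)

definition Qn :: "(nat \<Rightarrow> nat) \<Rightarrow> real" where
  "Qn n = kb * cnt n + kd * mass n + kI + kE * cnt n + kF * mass n + kC * cnt n * cnt n"

lemma pmf_total: "(\<integral>\<^sup>+y. ennreal (pmf p y) \<partial>count_space UNIV) = 1"
  using nn_integral_pmf[where p=p and A=UNIV] by (simp add: measure_pmf.emeasure_space_1[simplified])

lemma famB: "n \<in> fin_states \<Longrightarrow> (\<integral>\<^sup>+x. ennreal (rt (Birth x) n) \<partial>count_space UNIV) = ennreal (kb * cnt n)"
  by (subst sum_supp_nn[where n=n]) (auto simp: rt_simps kb cnt_def sum_distrib_left)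

lemma famD: "n \<in> fin_states \<Longrightarrow> (\<integral>\<^sup>+x. ennreal (rt (Death x) n) \<partial>count_space UNIV) = ennreal (kd * mass n)"
  by (subst sum_supp_nn[where n=n]) (auto simp: rt_simps kd mass_def sum_distrib_left mult_ac)

lemma famX: "n \<in> fin_states \<Longrightarrow> (\<integral>\<^sup>+x. ennreal (rt (Exit x) n) \<partial>count_space UNIV) = ennreal (kE * cnt n)"
  by (subst sum_supp_nn[where n=n]) (auto simp: rt_simps kE cnt_def sum_distrib_left)

lemma famI: "(\<integral>\<^sup>+x. ennreal (rt (Inflow x) n) \<partial>count_space UNIV) = ennreal kI"
proof -
  have "(\<integral>\<^sup>+x. ennreal (rt (Inflow x) n) \<partial>count_space UNIV) = (\<integral>\<^sup>+x. ennreal kI * ennreal (pmf mu x) \<partial>count_space UNIV)"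
    by (simp add: rt_simps ennreal_mult kI)
  also have "\<dots> = ennreal kI" by (simp add: nn_integral_cmult pmf_total)
  finally show ?thesis .
qed

lemma famF: "n \<in> fin_states \<Longrightarrow>
  (\<integral>\<^sup>+x. \<integral>\<^sup>+y. ennreal (rt (Frag x y) n) \<partial>count_space UNIV \<partial>count_space UNIV) = ennreal (kF * mass n)"
proof -
  assume n: "n \<in> fin_states"
  have "(\<integral>\<^sup>+x. \<integral>\<^sup>+y. ennreal (rt (Frag x y) n) \<partial>count_space UNIV \<partial>count_space UNIV) =
     (\<integral>\<^sup>+x. ennreal (kF * real x * real (n x)) \<partial>count_space UNIV)"
  proof (rule nn_integral_cong)
    fix x
    have "(\<integral>\<^sup>+y. ennreal (rt (Frag x y) n) \<partial>count_space UNIV) =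
        (\<integral>\<^sup>+y. ennreal (kF * real x * real (n x)) * ennreal (pmf (psi x) y) \<partial>count_space UNIV)"
      by (simp add: rt_simps ennreal_mult kF)
    also have "\<dots> = ennreal (kF * real x * real (n x))" by (simp add: nn_integral_cmult pmf_total)
    finally show "(\<integral>\<^sup>+y. ennreal (rt (Frag x y) n) \<partial>count_space UNIV) = ennreal (kF * real x * real (n x))" .
  qed
  also have "\<dots> = ennreal (kF * mass n)"
    by (subst sum_supp_nn[OF n]) (auto simp: kF mass_def sum_distrib_left mult_ac)
  finally show ?thesis .
qed

lemma coag_le: "rt (Coag x y) n \<le> kC * real (n x) * real (n y)"
proof (cases "x = y")
  case True
  have "n x choose 2 \<le> n x * n x"
  proof (cases "2 \<le> n x")
    case True then show ?thesis using binomial_le_pow[of 2 "n x"] by (simp add: power2_eq_square)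
  next
    case False then show ?thesis by (simp add: binomial_eq_0)
  qed
  then have "real (n x choose 2) \<le> real (n x) * real (n x)"
    by (metis of_nat_le_iff of_nat_mult)
  then show ?thesis using True kC by (simp add: rt_simps mult_left_mono mult.assoc)
next
  case False
  then show ?thesis using kC by (simp add: rt_simps)
qed

lemma famC: "n \<in> fin_states \<Longrightarrow>
  (\<integral>\<^sup>+x. \<integral>\<^sup>+y. ennreal (rt (Coag x y) n) \<partial>count_space UNIV \<partial>count_space UNIV) \<le> ennreal (kC * cnt n * cnt n)"
proof -
  assume n: "n \<in> fin_states"
  have "(\<integral>\<^sup>+x. \<integral>\<^sup>+y. ennreal (rt (Coag x y) n) \<partial>count_space UNIV \<partial>count_space UNIV) \<le>
     (\<integral>\<^sup>+x. \<integral>\<^sup>+y. ennreal (kC * real (n x) * real (n y)) \<partial>count_space UNIV \<partial>count_space UNIV)"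
    by (intro nn_integral_mono ennreal_leI coag_le)
  also have "\<dots> = (\<integral>\<^sup>+x. ennreal (kC * real (n x) * cnt n) \<partial>count_space UNIV)"
    by (intro nn_integral_cong, subst sum_supp_nn[OF n]) (auto simp: kC cnt_def sum_distrib_left intro!: sum_nonneg)
  also have "\<dots> = ennreal (kC * cnt n * cnt n)"
    by (subst sum_supp_nn[OF n]) (auto simp: kC cnt_def sum_distrib_left sum_distrib_right mult_ac intro!: sum_nonneg)
  finally show ?thesis .
qed

lemma rt_total: "n \<in> fin_states \<Longrightarrow> (\<integral>\<^sup>+e. ennreal (rt e n) \<partial>count_space UNIV) \<le> ennreal (Qn n)"
proof -
  assume n: "n \<in> fin_states"
  have "(\<integral>\<^sup>+e. ennreal (rt e n) \<partial>count_space UNIV) \<le>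
    ennreal (kb * cnt n) + ennreal (kd * mass n) + ennreal kI + ennreal (kE * cnt n) + ennreal (kF * mass n) + ennreal (kC * cnt n * cnt n)"
    unfolding ev_decomp[of "\<lambda>e. ennreal (rt e n)"] famB[OF n] famD[OF n] famI famX[OF n] famF[OF n]
    by (intro add_left_mono famC[OF n])
  also have "\<dots> = ennreal (Qn n)" unfolding Qn_def
    by (simp add: ennreal_plus[symmetric] kb kd kI kE kF kC del: ennreal_plus)
  finally show ?thesis .
qed

lemma rt_fin: "n \<in> fin_states \<Longrightarrow> (\<integral>\<^sup>+e. ennreal (rt e n) \<partial>count_space UNIV) < \<infinity>"
  using rt_total[of n] by (simp add: le_less_trans)


definition dd :: "cevent \<Rightarrow> nat" where
  "dd e = (case e of Birth _ \<Rightarrow> 1 | Frag _ _ \<Rightarrow> 1 | Inflow x \<Rightarrow> x + 1 | _ \<Rightarrow> 0)"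

lemma del1_at: "del1 n x y = (if y = x then n x - 1 else n y)"
  by (simp add: del1_def)

lemma sz_tgt:
  assumes n: "n \<in> fin_states" and pos: "rt e n > 0"
  shows "sz (comp_tgt e n) \<le> sz n + dd e"
proof (cases e)
  case (Birth x)
  have "n x \<noteq> 0" using pos Birth by (auto simp: rt_simps intro: ccontr)
  then show ?thesis using sz_del1[OF n, of x] sz_add1[OF fin_del1[OF n], of x "x + 1"] Birth
    by (simp add: comp_tgt_def dd_def)
next
  case (Death x)
  have "n x \<noteq> 0" "x \<noteq> 0" using pos Death by (auto simp: rt_simps intro: ccontr)
  then show ?thesis using sz_del1[OF n, of x] sz_add1[OF fin_del1[OF n], of x "x - 1"] Death
    by (simp add: comp_tgt_def dd_def)
next
  case (Inflow x)
  then show ?thesis using sz_add1[OF n, of x] by (simp add: comp_tgt_def dd_def)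
next
  case (Exit x)
  have "n x \<noteq> 0" using pos Exit by (auto simp: rt_simps intro: ccontr)
  then show ?thesis using sz_del1[OF n, of x] Exit by (simp add: comp_tgt_def dd_def)
next
  case (Frag x y)
  have nx: "n x \<noteq> 0" and py: "pmf (psi x) y \<noteq> 0" using pos Frag by (auto simp: rt_simps intro: ccontr)
  then have "y \<in> set_pmf (psi x)" by (simp add: set_pmf_iff)
  then have yx: "y \<le> x" using psi_le by auto
  have f1: "del1 n x \<in> fin_states" by (rule fin_del1[OF n])
  have f2: "add1 (del1 n x) y \<in> fin_states" by (rule fin_add1[OF f1])
  show ?thesis using sz_del1[OF n, of x] sz_add1[OF f1, of y] sz_add1[OF f2, of "x - y"] Frag nx yx
    by (simp add: comp_tgt_def dd_def)
next
  case (Coag x y)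
  show ?thesis
  proof (cases "x = y")
    case True
    have nx: "n x \<ge> 2"
    proof (rule ccontr)
      assume "\<not> 2 \<le> n x"
      then have "n x choose 2 = 0" by (simp add: binomial_eq_0)
      then have "rt e n = 0" using Coag True by (simp add: rt_simps)
      with pos show False by simp
    qed
    have f1: "del1 n x \<in> fin_states" by (rule fin_del1[OF n])
    have f2: "del1 (del1 n x) x \<in> fin_states" by (rule fin_del1[OF f1])
    have "del1 n x x \<ge> 1" using nx by (simp add: del1_at)
    then show ?thesis using sz_del1[OF n, of x] sz_del1[OF f1, of x] sz_add1[OF f2, of "x + x"] Coag True nx
      by (simp add: comp_tgt_def dd_def)
  next
    case False
    have "n x \<noteq> 0" "n y \<noteq> 0" using pos Coag False by (auto simp: rt_simps intro: ccontr)
    have f1: "del1 n x \<in> fin_states" by (rule fin_del1[OF n])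
    have f2: "del1 (del1 n x) y \<in> fin_states" by (rule fin_del1[OF f1])
    have "del1 n x y \<ge> 1" using False \<open>n y \<noteq> 0\<close> by (simp add: del1_at)
    then show ?thesis using sz_del1[OF n, of x] sz_del1[OF f1, of y] sz_add1[OF f2, of "x + y"] Coag False \<open>n x \<noteq> 0\<close>
      by (simp add: comp_tgt_def dd_def)
  qed
qed


lemma rt_nn': "n \<in> fin_states \<Longrightarrow> 0 \<le> rt c n" by (rule rt_nn)

lemma TR: "n \<in> fin_states \<Longrightarrow> ennreal (total_rate rt comp_tgt n) =
  (\<integral>\<^sup>+e. ennreal (rt e n) \<partial>count_space {e. comp_tgt e n \<noteq> n})"
  by (rule tr_ennreal[of fin_states comp_tgt rt]) (auto simp: countable_fin fin_tgt rt_nn rt_fin[unfolded infinity_ennreal_def])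

lemma TRnn: "n \<in> fin_states \<Longrightarrow> 0 \<le> total_rate rt comp_tgt n"
  by (rule tr_nn[of fin_states comp_tgt rt]) (auto simp: countable_fin fin_tgt rt_nn rt_fin[unfolded infinity_ennreal_def])

definition psiF :: "real \<Rightarrow> real \<Rightarrow> (nat \<Rightarrow> nat) \<Rightarrow> real" where
  "psiF rr \<delta> n = min 1 ((real (sz n) + 1) / rr + \<delta>)"

definition inc :: "real \<Rightarrow> cevent \<Rightarrow> real" where
  "inc rr e = (case e of Birth _ \<Rightarrow> 1 / rr | Frag _ _ \<Rightarrow> 1 / rr | Inflow x \<Rightarrow> min 1 ((real x + 1) / rr) | _ \<Rightarrow> 0)"

definition infl :: "real \<Rightarrow> cevent \<Rightarrow> real" where
  "infl rr e = (case e of Inflow x \<Rightarrow> min 1 ((real x + 1) / rr) | _ \<Rightarrow> 0)"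

lemma inc_nn: "rr > 0 \<Longrightarrow> 0 \<le> inc rr e"
  by (cases e) (auto simp: inc_def)

lemma infl_nn: "rr > 0 \<Longrightarrow> 0 \<le> infl rr e"
  by (cases e) (auto simp: infl_def)

lemma inc_le: "rr > 0 \<Longrightarrow> inc rr e \<le> 1 / rr + infl rr e"
proof -
  assume rr: "rr > 0"
  then have "0 \<le> 1 / rr" by simp
  then show ?thesis using rr by (cases e) (auto simp: inc_def infl_def add.commute)
qed

lemma psi_inc:
  assumes rr: "rr > 0" and d: "\<delta> \<ge> 0" and n: "n \<in> fin_states" and pos: "rt e n > 0"
  shows "psiF rr \<delta> (comp_tgt e n) \<le> psiF rr \<delta> n + inc rr e"
proof -
  define a where "a = (real (sz n) + 1) / rr + \<delta>"
  define b where "b = real (dd e) / rr"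
  have a0: "0 \<le> a" using rr d by (simp add: a_def)
  have b0: "0 \<le> b" using rr by (simp add: b_def)
  have "real (sz (comp_tgt e n)) \<le> real (sz n) + real (dd e)"
    using sz_tgt[OF n pos] by linarith
  then have "(real (sz (comp_tgt e n)) + 1) / rr + \<delta> \<le> a + b"
    using rr by (simp add: a_def b_def add_divide_distrib[symmetric] divide_right_mono)
  then have "psiF rr \<delta> (comp_tgt e n) \<le> min 1 (a + b)" unfolding psiF_def by simp
  also have "\<dots> \<le> min 1 a + min 1 b" using a0 b0 by (simp add: min_def)
  also have "min 1 b \<le> inc rr e" using rr by (cases e) (auto simp: b_def dd_def inc_def add.commute)
  finally show ?thesis by (simp add: psiF_def a_def)
qed

definition etae :: "real \<Rightarrow> ennreal" where
  "etae rr = (\<integral>\<^sup>+x. ennreal (pmf mu x) * ennreal (min 1 ((real x + 1) / rr)) \<partial>count_space UNIV)"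

definition eta :: "real \<Rightarrow> real" where "eta rr = enn2real (etae rr)"

lemma etae_le1: "etae rr \<le> 1"
proof -
  have "etae rr \<le> (\<integral>\<^sup>+x. ennreal (pmf mu x) \<partial>count_space UNIV)"
    unfolding etae_def
  proof (intro nn_integral_mono)
    fix x
    have "ennreal (min 1 ((real x + 1) / rr)) \<le> 1" by (simp add: ennreal_le_1)
    then show "ennreal (pmf mu x) * ennreal (min 1 ((real x + 1) / rr)) \<le> ennreal (pmf mu x)"
      using mult_left_mono[of _ 1 "ennreal (pmf mu x)"] by fastforce
  qed
  then show ?thesis by (simp add: pmf_total)
qed

lemma eta_eq: "ennreal (eta rr) = etae rr"
  unfolding eta_def using etae_le1[of rr] by (simp add: ennreal_enn2real_if top_unique) (metis ennreal_one_neq_top top_unique)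

lemma eta_nn: "0 \<le> eta rr" unfolding eta_def by simp


lemma psiF_nn: "rr > 0 \<Longrightarrow> \<delta> \<ge> 0 \<Longrightarrow> 0 \<le> psiF rr \<delta> n"
  unfolding psiF_def by simp

lemma kI_le_q:
  assumes n: "n \<in> fin_states"
  shows "kI \<le> total_rate rt comp_tgt n"
proof -
  define Ev where "Ev = {e. comp_tgt e n \<noteq> n}"
  have inEv: "Inflow x \<in> Ev" for x
  proof -
    have "comp_tgt (Inflow x) n x \<noteq> n x" by (simp add: comp_tgt_def add1_def)
    then show ?thesis unfolding Ev_def by auto
  qed
  define f where "f e = ennreal (rt e n) * indicator Ev e" for e
  have "ennreal (total_rate rt comp_tgt n) = (\<integral>\<^sup>+e. ennreal (rt e n) \<partial>count_space Ev)"
    unfolding Ev_def by (rule TR[OF n])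
  also have "\<dots> = (\<integral>\<^sup>+e. f e \<partial>count_space UNIV)" unfolding f_def by (rule cs_ind)
  also have "\<dots> = (\<integral>\<^sup>+x. f (Inflow x) \<partial>count_space UNIV) +
    ((\<integral>\<^sup>+x. f (Birth x) \<partial>count_space UNIV) + (\<integral>\<^sup>+x. f (Death x) \<partial>count_space UNIV) +
    (\<integral>\<^sup>+x. f (Exit x) \<partial>count_space UNIV) +
    (\<integral>\<^sup>+x. \<integral>\<^sup>+y. f (Frag x y) \<partial>count_space UNIV \<partial>count_space UNIV) +
    (\<integral>\<^sup>+x. \<integral>\<^sup>+y. f (Coag x y) \<partial>count_space UNIV \<partial>count_space UNIV))"
    unfolding ev_decomp[of f] by (simp add: ac_simps)
  finally have *: "(\<integral>\<^sup>+x. f (Inflow x) \<partial>count_space UNIV) \<le> ennreal (total_rate rt comp_tgt n)"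
  proof -
    assume eq: "ennreal (total_rate rt comp_tgt n) = (\<integral>\<^sup>+x. f (Inflow x) \<partial>count_space UNIV) +
    ((\<integral>\<^sup>+x. f (Birth x) \<partial>count_space UNIV) + (\<integral>\<^sup>+x. f (Death x) \<partial>count_space UNIV) +
    (\<integral>\<^sup>+x. f (Exit x) \<partial>count_space UNIV) +
    (\<integral>\<^sup>+x. \<integral>\<^sup>+y. f (Frag x y) \<partial>count_space UNIV \<partial>count_space UNIV) +
    (\<integral>\<^sup>+x. \<integral>\<^sup>+y. f (Coag x y) \<partial>count_space UNIV \<partial>count_space UNIV))"
    show ?thesis unfolding eq by (rule add_increasing2[OF zero_le order_refl])
  qed
  have "(\<integral>\<^sup>+x. f (Inflow x) \<partial>count_space UNIV) = ennreal kI"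
    unfolding f_def using inEv by (simp add: famI)
  with * have "ennreal kI \<le> ennreal (total_rate rt comp_tgt n)" by simp
  then show ?thesis using TRnn[OF n] by (simp add: ennreal_le_iff)
qed

lemma gen:
  assumes n: "n \<in> fin_states" and rr: "rr > 0" and d: "\<delta> \<ge> 0"
  shows "\<exists>J. 0 \<le> J \<and> J \<le> (kb + kF) * (real (sz n) + 1) / rr + kI * eta rr \<and>
     J \<le> total_rate rt comp_tgt n * (1 / rr + eta rr) \<and>
     (\<integral>\<^sup>+e. ennreal (rt e n) * ennreal (psiF rr \<delta> (comp_tgt e n)) \<partial>count_space {e. comp_tgt e n \<noteq> n})
       \<le> ennreal (total_rate rt comp_tgt n * psiF rr \<delta> n + J)"
proof -
  define Ev where "Ev = {e. comp_tgt e n \<noteq> n}"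
  define q where "q = total_rate rt comp_tgt n"
  have q0: "0 \<le> q" unfolding q_def by (rule TRnn[OF n])
  have qE: "ennreal q = (\<integral>\<^sup>+e. ennreal (rt e n) \<partial>count_space Ev)" unfolding q_def Ev_def by (rule TR[OF n])
  define Jn where "Jn = (\<integral>\<^sup>+e. ennreal (rt e n) * ennreal (inc rr e) \<partial>count_space Ev)"
  define g where "g e = ennreal (rt e n) * ennreal (inc rr e)" for e
  have "Jn \<le> (\<integral>\<^sup>+e. g e \<partial>count_space UNIV)" unfolding Jn_def g_def
    by (rule nn_integral_count_space_subset_le) simp
  also have "\<dots> = ennreal (kb * cnt n) * ennreal (1 / rr) + 0 + ennreal kI * etae rr + 0 +
      ennreal (kF * mass n) * ennreal (1 / rr) + 0"
  proof -
    have B: "(\<integral>\<^sup>+x. g (Birth x) \<partial>count_space UNIV) = ennreal (kb * cnt n) * ennreal (1 / rr)"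
      unfolding g_def inc_def by (simp add: nn_integral_multc famB[OF n])
    have D: "(\<integral>\<^sup>+x. g (Death x) \<partial>count_space UNIV) = 0" unfolding g_def inc_def by simp
    have X: "(\<integral>\<^sup>+x. g (Exit x) \<partial>count_space UNIV) = 0" unfolding g_def inc_def by simp
    have C: "(\<integral>\<^sup>+x. \<integral>\<^sup>+y. g (Coag x y) \<partial>count_space UNIV \<partial>count_space UNIV) = 0" unfolding g_def inc_def by simp
    have F: "(\<integral>\<^sup>+x. \<integral>\<^sup>+y. g (Frag x y) \<partial>count_space UNIV \<partial>count_space UNIV) = ennreal (kF * mass n) * ennreal (1 / rr)"
      unfolding g_def inc_def by (simp add: nn_integral_multc famF[OF n])
    have I: "(\<integral>\<^sup>+x. g (Inflow x) \<partial>count_space UNIV) = ennreal kI * etae rr"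
    proof -
      have "(\<integral>\<^sup>+x. g (Inflow x) \<partial>count_space UNIV) =
          (\<integral>\<^sup>+x. ennreal kI * (ennreal (pmf mu x) * ennreal (min 1 ((real x + 1) / rr))) \<partial>count_space UNIV)"
        unfolding g_def inc_def by (intro nn_integral_cong) (simp add: rt_simps ennreal_mult kI mult.assoc)
      also have "\<dots> = ennreal kI * etae rr" unfolding etae_def by (rule nn_integral_cmult) simp
      finally show ?thesis .
    qed
    show ?thesis unfolding ev_decomp[of g] B D X C F I ..
  qed
  also have "\<dots> = ennreal ((kb * cnt n + kF * mass n) / rr + kI * eta rr)"
    using rr kb kF kI eta_nn[of rr]
    by (simp add: eta_eq[symmetric] ennreal_mult[symmetric] ennreal_plus[symmetric] add_divide_distrib
        del: ennreal_plus)
  also have "\<dots> \<le> ennreal ((kb + kF) * (real (sz n) + 1) / rr + kI * eta rr)"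
  proof (intro ennreal_leI add_right_mono divide_right_mono)
    have "real (cnt n) \<le> real (sz n) + 1" "real (mass n) \<le> real (sz n) + 1" by (simp_all add: sz_eq)
    then show "kb * real (cnt n) + kF * real (mass n) \<le> (kb + kF) * (real (sz n) + 1)"
      using kb kF by (simp add: distrib_right add_mono mult_left_mono)
  qed (use rr in auto)
  finally have Ja: "Jn \<le> ennreal ((kb + kF) * (real (sz n) + 1) / rr + kI * eta rr)" .
  define h where "h e = ennreal (rt e n) * ennreal (infl rr e)" for e
  have "Jn \<le> (\<integral>\<^sup>+e. ennreal (rt e n) * ennreal (1 / rr) + h e \<partial>count_space Ev)"
    unfolding Jn_def h_def
  proof (intro nn_integral_mono)
    fix e
    have "ennreal (inc rr e) \<le> ennreal (1 / rr) + ennreal (infl rr e)"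
      using inc_le[OF rr, of e] infl_nn[OF rr, of e] rr by (simp add: ennreal_plus[symmetric] del: ennreal_plus)
    then show "ennreal (rt e n) * ennreal (inc rr e) \<le> ennreal (rt e n) * ennreal (1 / rr) + ennreal (rt e n) * ennreal (infl rr e)"
      using mult_left_mono[of _ _ "ennreal (rt e n)"] by (simp add: distrib_left[symmetric])
  qed
  also have "\<dots> = ennreal q * ennreal (1 / rr) + (\<integral>\<^sup>+e. h e \<partial>count_space Ev)"
    by (simp add: nn_integral_add nn_integral_multc qE)
  also have "(\<integral>\<^sup>+e. h e \<partial>count_space Ev) \<le> (\<integral>\<^sup>+e. h e \<partial>count_space UNIV)"
    by (rule nn_integral_count_space_subset_le) simp
  also have "(\<integral>\<^sup>+e. h e \<partial>count_space UNIV) = ennreal kI * etae rr"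
  proof -
    have I: "(\<integral>\<^sup>+x. h (Inflow x) \<partial>count_space UNIV) = ennreal kI * etae rr"
    proof -
      have "(\<integral>\<^sup>+x. h (Inflow x) \<partial>count_space UNIV) =
          (\<integral>\<^sup>+x. ennreal kI * (ennreal (pmf mu x) * ennreal (min 1 ((real x + 1) / rr))) \<partial>count_space UNIV)"
        unfolding h_def infl_def by (intro nn_integral_cong) (simp add: rt_simps ennreal_mult kI mult.assoc)
      also have "\<dots> = ennreal kI * etae rr" unfolding etae_def by (rule nn_integral_cmult) simp
      finally show ?thesis .
    qed
    show ?thesis unfolding ev_decomp[of h] I by (simp add: h_def infl_def)
  qed
  also have "ennreal q * ennreal (1 / rr) + ennreal kI * etae rr \<le> ennreal (q * (1 / rr + eta rr))"
  proof -
    have "kI * eta rr \<le> q * eta rr" using kI_le_q[OF n] eta_nn[of rr] by (simp add: q_def mult_right_mono)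
    then have "q * (1 / rr) + kI * eta rr \<le> q * (1 / rr + eta rr)" by (simp add: distrib_left)
    then have "ennreal (q * (1 / rr) + kI * eta rr) \<le> ennreal (q * (1 / rr + eta rr))" by (rule ennreal_leI)
    then show ?thesis using q0 rr kI eta_nn[of rr]
      by (simp add: eta_eq[symmetric] ennreal_mult[symmetric] ennreal_plus[symmetric] del: ennreal_plus)
  qed
  finally have Jb: "Jn \<le> ennreal (q * (1 / rr + eta rr))" by simp
  define J where "J = enn2real Jn"
  have Jfin: "Jn < \<infinity>" using Ja by (simp add: le_less_trans)
  have JnJ: "Jn = ennreal J" unfolding J_def using Jfin by (simp add: ennreal_enn2real_if)
  have J0: "0 \<le> J" unfolding J_def by simp
  have A0: "0 \<le> (kb + kF) * (real (sz n) + 1) / rr + kI * eta rr"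
    using kb kF kI rr eta_nn[of rr] by simp
  have J1: "J \<le> (kb + kF) * (real (sz n) + 1) / rr + kI * eta rr"
    using Ja unfolding JnJ ennreal_le_iff[OF A0] .
  have B0: "0 \<le> q * (1 / rr + eta rr)" using q0 rr eta_nn[of rr] by simp
  have J2: "J \<le> q * (1 / rr + eta rr)" using Jb unfolding JnJ ennreal_le_iff[OF B0] .
  have psn: "0 \<le> psiF rr \<delta> n" by (rule psiF_nn[OF rr d])
  have "(\<integral>\<^sup>+e. ennreal (rt e n) * ennreal (psiF rr \<delta> (comp_tgt e n)) \<partial>count_space Ev) \<le>
      (\<integral>\<^sup>+e. ennreal (rt e n) * ennreal (psiF rr \<delta> n) + ennreal (rt e n) * ennreal (inc rr e) \<partial>count_space Ev)"
  proof (intro nn_integral_mono)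
    fix e
    show "ennreal (rt e n) * ennreal (psiF rr \<delta> (comp_tgt e n)) \<le> ennreal (rt e n) * ennreal (psiF rr \<delta> n) + ennreal (rt e n) * ennreal (inc rr e)"
    proof (cases "rt e n > 0")
      case True
      have "ennreal (psiF rr \<delta> (comp_tgt e n)) \<le> ennreal (psiF rr \<delta> n) + ennreal (inc rr e)"
        using psi_inc[OF rr d n True] psn inc_nn[OF rr, of e]
        by (simp add: ennreal_plus[symmetric] del: ennreal_plus)
      then show ?thesis using mult_left_mono[of _ _ "ennreal (rt e n)"] by (simp add: distrib_left[symmetric])
    next
      case False
      then have "rt e n = 0" using rt_nn[of e n] by simp
      then show ?thesis by simp
    qed
  qed
  also have "\<dots> = ennreal q * ennreal (psiF rr \<delta> n) + Jn"
    unfolding Jn_def by (simp add: nn_integral_add nn_integral_multc qE)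
  also have "\<dots> = ennreal (q * psiF rr \<delta> n + J)"
    unfolding JnJ using q0 psn J0 by (simp add: ennreal_mult ennreal_plus)
  finally show ?thesis using J0 J1 J2 unfolding Ev_def q_def by blast
qed


lemma eta_int: "rr > 0 \<Longrightarrow> eta rr = measure_pmf.expectation mu (\<lambda>x. min 1 ((real x + 1) / rr))"
proof -
  assume rr: "rr > 0"
  have int: "integrable (measure_pmf mu) (\<lambda>x. min 1 ((real x + 1) / rr))"
    by (rule measure_pmf.integrable_const_bound[where B=1]) (use rr in auto)
  have "etae rr = (\<integral>\<^sup>+x. ennreal (min 1 ((real x + 1) / rr)) \<partial>measure_pmf mu)"
    unfolding etae_def nn_integral_measure_pmf ..
  also have "\<dots> = ennreal (measure_pmf.expectation mu (\<lambda>x. min 1 ((real x + 1) / rr)))"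
    by (rule nn_integral_eq_integral[OF int]) (use rr in \<open>auto simp: min_def\<close>)
  finally have "etae rr = ennreal (measure_pmf.expectation mu (\<lambda>x. min 1 ((real x + 1) / rr)))" .
  moreover have "0 \<le> measure_pmf.expectation mu (\<lambda>x. min 1 ((real x + 1) / rr))"
    by (rule integral_nonneg_AE) (use rr in \<open>auto simp: min_def\<close>)
  ultimately show ?thesis unfolding eta_def by simp
qed

lemma eta_lim: "(\<lambda>N. eta (real (Suc N))) \<longlonglongrightarrow> 0"
proof -
  have "(\<lambda>N. measure_pmf.expectation mu (\<lambda>x. min 1 ((real x + 1) / real (Suc N)))) \<longlonglongrightarrow>
      measure_pmf.expectation mu (\<lambda>x. 0::real)"
  proof (rule integral_dominated_convergence[where w="\<lambda>_. 1"])
    show "AE x in measure_pmf mu. (\<lambda>N. min 1 ((real x + 1) / real (Suc N))) \<longlonglongrightarrow> 0"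
    proof (rule AE_I2)
      fix x :: nat
      have "(\<lambda>N. (real x + 1) / real (Suc N)) \<longlonglongrightarrow> 0"
        using tendsto_mult[OF tendsto_const[of "real x + 1"] LIMSEQ_inverse_real_of_nat]
        by (simp add: divide_inverse)
      then have "(\<lambda>N. min 1 ((real x + 1) / real (Suc N))) \<longlonglongrightarrow> min 1 0"
        by (intro tendsto_min tendsto_const)
      then show "(\<lambda>N. min 1 ((real x + 1) / real (Suc N))) \<longlonglongrightarrow> 0" by simp
    qed
    show "\<And>N. AE x in measure_pmf mu. norm (min 1 ((real x + 1) / real (Suc N))) \<le> 1"
      by (rule AE_I2) (auto simp: min_def)
  qed auto
  moreover have "eta (real (Suc N)) = measure_pmf.expectation mu (\<lambda>x. min 1 ((real x + 1) / real (Suc N)))" for N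
    by (rule eta_int) simp
  ultimately show ?thesis by simp
qed


lemma q_le_Qn: "n \<in> fin_states \<Longrightarrow> total_rate rt comp_tgt n \<le> Qn n"
proof -
  assume n: "n \<in> fin_states"
  have "ennreal (total_rate rt comp_tgt n) \<le> (\<integral>\<^sup>+e. ennreal (rt e n) \<partial>count_space UNIV)"
    unfolding TR[OF n] by (rule nn_integral_count_space_subset_le) simp
  also have "\<dots> \<le> ennreal (Qn n)" by (rule rt_total[OF n])
  finally have "ennreal (total_rate rt comp_tgt n) \<le> ennreal (Qn n)" .
  moreover have "0 \<le> Qn n" unfolding Qn_def using kb kd kI kE kF kC by simp
  ultimately show ?thesis by (simp add: ennreal_le_iff)
qed

lemma key:
  assumes s0: "s0 \<in> fin_states" and e: "\<epsilon> > 0"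
  defines "c \<equiv> max 1 (kb + kF)"
  defines "lam \<equiv> 2 * c / exp (-1)"
  shows "\<exists>\<psi> \<rho>. 0 \<le> \<rho> \<and> \<rho> < 1 \<and> \<psi> s0 < \<epsilon> \<and> (\<forall>s\<in>fin_states. 0 \<le> \<psi> s) \<and>
        (\<forall>s\<in>fin_states. \<psi> s < 1 \<longrightarrow> phiq rt comp_tgt lam s \<le> \<rho> \<and>
          ennreal (phiq rt comp_tgt lam s) * (\<integral>\<^sup>+s'. ennreal (jump_prob rt comp_tgt s s') * ennreal (\<psi> s') \<partial>count_space fin_states) \<le> ennreal (\<psi> s))"
proof -
  define p where "p = exp (-1::real)"
  define \<kappa> where "\<kappa> = p * (1 - exp (-1))"
  have c1: "c \<ge> 1" "c \<ge> kb + kF" unfolding c_def by auto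
  have p0: "0 < p" "p < 1" unfolding p_def by auto
  have k0: "\<kappa> > 0" unfolding \<kappa>_def p_def by simp
  have lam0: "lam > 0" unfolding lam_def using c1 by simp
  define dl where "dl rr = kI * eta rr / c + (1 / rr + eta rr) / \<kappa>" for rr
  define F where "F N = (real (sz s0) + 1) / real (Suc N) + dl (real (Suc N))" for N
  have l1: "(\<lambda>N. 1 / real (Suc N)) \<longlonglongrightarrow> 0"
    using LIMSEQ_inverse_real_of_nat by (simp add: inverse_eq_divide)
  have l2: "(\<lambda>N. (real (sz s0) + 1) / real (Suc N)) \<longlonglongrightarrow> 0"
    using tendsto_mult[OF tendsto_const[of "real (sz s0) + 1"] l1] by simp
  have l3: "(\<lambda>N. kI * eta (real (Suc N)) / c) \<longlonglongrightarrow> kI * 0 / c"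
    by (intro tendsto_divide tendsto_mult tendsto_const eta_lim) (use c1 in auto)
  have l4: "(\<lambda>N. (1 / real (Suc N) + eta (real (Suc N))) / \<kappa>) \<longlonglongrightarrow> (0 + 0) / \<kappa>"
    by (intro tendsto_divide tendsto_add l1 eta_lim tendsto_const) (use k0 in auto)
  have "F \<longlonglongrightarrow> 0 + (kI * 0 / c + (0 + 0) / \<kappa>)"
    unfolding F_def dl_def by (intro tendsto_add l2 l3 l4)
  then have Flim: "F \<longlonglongrightarrow> 0" by simp
  have "eventually (\<lambda>N. F N < \<epsilon>) sequentially" by (rule order_tendstoD(2)[OF Flim e])
  then obtain N0 where "\<forall>n\<ge>N0. F n < \<epsilon>" by (auto simp: eventually_sequentially)
  then obtain N where N: "F N < \<epsilon>" by blast
  define rr where "rr = real (Suc N)"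
  have rr: "rr > 0" unfolding rr_def by simp
  define \<delta> where "\<delta> = dl rr"
  have d0: "\<delta> \<ge> 0" unfolding \<delta>_def dl_def using kI eta_nn[of rr] c1 rr k0 by auto
  define Qr where "Qr = (kb + kd + kE + kF) * rr + kI + kC * rr * rr"
  have Qr0: "Qr \<ge> 0" unfolding Qr_def using kb kd kE kF kI kC rr by simp
  define \<rho> where "\<rho> = p * exp (- lam / (Qr + 1)) + (1 - p)"
  have r0: "0 \<le> \<rho>" unfolding \<rho>_def using p0 by (simp add: add_nonneg_nonneg)
  have r1: "\<rho> < 1"
  proof -
    have "exp (- lam / (Qr + 1)) < 1" using lam0 Qr0 by simp
    then show ?thesis unfolding \<rho>_def using p0 by simp
  qed
  define \<psi> where "\<psi> = psiF rr \<delta>"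
  have psi0: "\<forall>s\<in>fin_states. 0 \<le> \<psi> s" unfolding \<psi>_def using psiF_nn[OF rr d0] by auto
  have psis0: "\<psi> s0 < \<epsilon>"
  proof -
    have "\<psi> s0 \<le> (real (sz s0) + 1) / rr + \<delta>" unfolding \<psi>_def psiF_def by simp
    also have "\<dots> = F N" unfolding F_def rr_def \<delta>_def ..
    finally show ?thesis using N by simp
  qed
  have main: "phiq rt comp_tgt lam s \<le> \<rho> \<and>
          ennreal (phiq rt comp_tgt lam s) * (\<integral>\<^sup>+s'. ennreal (jump_prob rt comp_tgt s s') * ennreal (\<psi> s') \<partial>count_space fin_states) \<le> ennreal (\<psi> s)"
    if s: "s \<in> fin_states" and ps1: "\<psi> s < 1" for s
  proof -
    define q where "q = total_rate rt comp_tgt s"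
    have q0: "0 \<le> q" unfolding q_def by (rule TRnn[OF s])
    have psis: "\<psi> s = (real (sz s) + 1) / rr + \<delta>" using ps1 unfolding \<psi>_def psiF_def by (simp add: min_def split: if_splits)
    have szr: "real (sz s) + 1 < rr"
    proof -
      have "(real (sz s) + 1) / rr < 1" using psis ps1 d0 by linarith
      then show ?thesis using rr by (simp add: divide_less_eq)
    qed
    have qQ: "q \<le> Qr"
    proof -
      have cs: "real (cnt s) \<le> rr" "real (mass s) \<le> rr" using szr by (simp_all add: sz_eq)
      have "q \<le> Qn s" unfolding q_def by (rule q_le_Qn[OF s])
      also have "Qn s \<le> Qr" unfolding Qn_def Qr_def
      proof -
        have "kb * real (cnt s) \<le> kb * rr" using cs kb by (simp add: mult_left_mono)
        moreover have "kd * real (mass s) \<le> kd * rr" using cs kd by (simp add: mult_left_mono)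
        moreover have "kE * real (cnt s) \<le> kE * rr" using cs kE by (simp add: mult_left_mono)
        moreover have "kF * real (mass s) \<le> kF * rr" using cs kF by (simp add: mult_left_mono)
        moreover have "kC * real (cnt s) * real (cnt s) \<le> kC * rr * rr"
          using cs kC by (simp add: mult_mono mult.assoc mult_left_mono)
        ultimately show "kb * real (cnt s) + kd * real (mass s) + kI + kE * real (cnt s) + kF * real (mass s) + kC * real (cnt s) * real (cnt s)
            \<le> (kb + kd + kE + kF) * rr + kI + kC * rr * rr" by (simp add: algebra_simps)
      qed
      finally show ?thesis .
    qed
    show ?thesis
    proof (cases "q = 0")
      case True
      then have "phiq rt comp_tgt lam s = 0" unfolding phiq_def q_def by simp
      then show ?thesis using r0 by simp
    next
      case False
      then have qp: "q > 0" using q0 by simp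
      have phi_eq: "phiq rt comp_tgt lam s = p * exp (- lam / q) + (1 - p)"
        unfolding phiq_def q_def[symmetric] p_def using False by simp
      have phile: "phiq rt comp_tgt lam s \<le> \<rho>"
      proof -
        have "lam / (Qr + 1) \<le> lam / q" using qp qQ lam0 by (intro divide_left_mono) auto
        then have "exp (- lam / q) \<le> exp (- lam / (Qr + 1))" by simp
        then show ?thesis unfolding phi_eq \<rho>_def using p0 by simp
      qed
      obtain J where J0: "0 \<le> J" and J1: "J \<le> (kb + kF) * (real (sz s) + 1) / rr + kI * eta rr"
        and J2: "J \<le> q * (1 / rr + eta rr)"
        and JI: "(\<integral>\<^sup>+e. ennreal (rt e s) * ennreal (psiF rr \<delta> (comp_tgt e s)) \<partial>count_space {e. comp_tgt e s \<noteq> s})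
           \<le> ennreal (q * psiF rr \<delta> s + J)"
        using gen[OF s rr d0] unfolding q_def by blast
      have "(\<integral>\<^sup>+s'. ennreal (jump_prob rt comp_tgt s s') * ennreal (\<psi> s') \<partial>count_space fin_states) =
          ennreal (1 / q) * (\<integral>\<^sup>+e. ennreal (rt e s) * ennreal (\<psi> (comp_tgt e s)) \<partial>count_space {e. comp_tgt e s \<noteq> s})"
        unfolding q_def
        by (rule P_eq[of fin_states comp_tgt rt]) (use s qp in \<open>auto simp: countable_fin fin_tgt rt_nn rt_fin[unfolded infinity_ennreal_def] q_def\<close>)
      also have "\<dots> \<le> ennreal (1 / q) * ennreal (q * \<psi> s + J)"
        using JI unfolding \<psi>_def by (rule mult_left_mono) simp
      finally have PB: "(\<integral>\<^sup>+s'. ennreal (jump_prob rt comp_tgt s s') * ennreal (\<psi> s') \<partial>count_space fin_states) \<le>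
          ennreal (1 / q) * ennreal (q * \<psi> s + J)" .
      have psn: "0 \<le> \<psi> s" using psi0 s by auto
      have phn: "0 \<le> phiq rt comp_tgt lam s" by (rule phiq_nn)
      have RLb: "(p * exp (- lam / q) + (1 - p)) * (\<psi> s + J / q) \<le> \<psi> s"
      proof (rule RL[where c=c and \<epsilon>="1 / rr + eta rr" and \<kappa>=\<kappa>])
        show "J \<le> c * \<psi> s"
        proof -
          have "J \<le> (kb + kF) * (real (sz s) + 1) / rr + kI * eta rr" by (rule J1)
          also have "\<dots> \<le> c * ((real (sz s) + 1) / rr) + c * (kI * eta rr / c)"
          proof (intro add_mono)
            show "(kb + kF) * (real (sz s) + 1) / rr \<le> c * ((real (sz s) + 1) / rr)"
              using c1 rr by (simp add: divide_right_mono mult_right_mono)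
            show "kI * eta rr \<le> c * (kI * eta rr / c)" using c1 by simp
          qed
          also have "\<dots> \<le> c * \<psi> s"
          proof -
            have "kI * eta rr / c \<le> \<delta>" unfolding \<delta>_def dl_def using k0 rr eta_nn[of rr] by simp
            then have "kI * eta rr \<le> \<delta> * c" using c1 by (simp add: pos_divide_le_eq)
            then show ?thesis unfolding psis using c1 by (simp add: distrib_left mult.commute)
          qed
          finally show ?thesis .
        qed
        show "1 / rr + eta rr \<le> \<kappa> * \<psi> s"
        proof -
          have "(1 / rr + eta rr) / \<kappa> \<le> \<delta>" unfolding \<delta>_def dl_def using kI eta_nn[of rr] c1 by simp
          also have "\<delta> \<le> \<psi> s" unfolding psis using rr by simp
          finally show ?thesis using k0 by (simp add: divide_le_eq mult.commute)
        qed
      qed (use qp psn J0 J2 c1 in \<open>auto simp: p_def lam_def \<kappa>_def\<close>)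
      have "ennreal (phiq rt comp_tgt lam s) * (\<integral>\<^sup>+s'. ennreal (jump_prob rt comp_tgt s s') * ennreal (\<psi> s') \<partial>count_space fin_states)
          \<le> ennreal (phiq rt comp_tgt lam s) * (ennreal (1 / q) * ennreal (q * \<psi> s + J))"
        by (rule mult_left_mono[OF PB]) simp
      also have "\<dots> = ennreal (phiq rt comp_tgt lam s * ((1 / q) * (q * \<psi> s + J)))"
      proof -
        have X0: "0 \<le> q * \<psi> s + J" using qp psn J0 by simp
        have "ennreal (1 / q) * ennreal (q * \<psi> s + J) = ennreal ((1 / q) * (q * \<psi> s + J))"
          by (rule ennreal_mult[symmetric]) (use qp X0 in auto)
        moreover have "ennreal (phiq rt comp_tgt lam s) * ennreal ((1 / q) * (q * \<psi> s + J)) =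
            ennreal (phiq rt comp_tgt lam s * ((1 / q) * (q * \<psi> s + J)))"
          by (rule ennreal_mult[symmetric]) (use phn qp X0 in auto)
        ultimately show ?thesis by simp
      qed
      also have "phiq rt comp_tgt lam s * ((1 / q) * (q * \<psi> s + J)) = (p * exp (- lam / q) + (1 - p)) * (\<psi> s + J / q)"
        unfolding phi_eq using qp by (simp add: field_simps)
      also have "ennreal \<dots> \<le> ennreal (\<psi> s)" using RLb by (rule ennreal_leI)
      finally show ?thesis using phile by simp
    qed
  qed
  show ?thesis using r0 r1 psis0 psi0 main by blast
qed

theorem model_nonexplosive: "non_explosive rt comp_tgt fin_states TYPE('w)"
  unfolding non_explosive_def
proof (intro ballI allI impI)
  fix s0 and M :: "'w measure" and Y E
  assume s0: "s0 \<in> fin_states" and real: "ctmc_realization rt comp_tgt s0 M Y E"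
  define c where "c = max 1 (kb + kF)"
  define lam where "lam = 2 * c / exp (-1::real)"
  have lam0: "lam > 0" unfolding lam_def c_def by simp
  have fin': "\<And>s. s \<in> fin_states \<Longrightarrow> (\<integral>\<^sup>+e. ennreal (rt e s) \<partial>count_space UNIV) < \<infinity>"
    by (rule rt_fin)
  show "AE \<omega> in M. explosion_time rt comp_tgt Y E \<omega> = \<infinity>"
  proof (rule crit[of fin_states comp_tgt rt s0 M Y E lam, OF countable_fin fin_tgt rt_nn' fin' s0 real lam0])
    fix \<epsilon> :: real assume "\<epsilon> > 0"
    from key[OF s0 this] show "\<exists>\<psi> \<rho>. 0 \<le> \<rho> \<and> \<rho> < 1 \<and> \<psi> s0 < \<epsilon> \<and> (\<forall>s\<in>fin_states. 0 \<le> \<psi> s) \<and>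
        (\<forall>s\<in>fin_states. \<psi> s < 1 \<longrightarrow> phiq rt comp_tgt lam s \<le> \<rho> \<and>
          ennreal (phiq rt comp_tgt lam s) * (\<integral>\<^sup>+s'. ennreal (jump_prob rt comp_tgt s s') * ennreal (\<psi> s') \<partial>count_space fin_states) \<le> ennreal (\<psi> s))"
      unfolding lam_def c_def .
  qed
qed

end


theorem corollary3p3:
  fixes kb kd kI kE kF kC :: real and mu :: "nat pmf" and psi :: "nat \<Rightarrow> nat pmf"
  assumes "kb \<ge> 0" "kd \<ge> 0" "kI \<ge> 0" "kE \<ge> 0" "kF \<ge> 0" "kC \<ge> 0"
    and "\<And>x. set_pmf (psi x) \<subseteq> {..x}"
  shows "non_explosive (comp_rate kb kd kI kE kF kC mu psi) comp_tgt fin_states TYPE('w)"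
  by (rule model_nonexplosive[OF assms])

end
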